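(* A graph $G$ can be explained by a labeled level-1 network if and only if every induced subgraph of $G$ can be explained by a labeled level-1 network.
   Context: Graphs finite, simple, undirected. Network on finite $X$: a DAG $N=(V,E)$ with either $V=X=\{x\}$, or (N1) unique root of indegree 0, outdegree $\ge2$; (N2) $x\in X$ iff outdegree 0, indegree 1; (N3) every other non-root vertex has indegree 1 and outdegree $\ge2$, or indegree 2 (hybrid-vertex) and outdegree $\ge1$. Level-1: every biconnected component of the underlying undirected graph contains at most one hybrid-vertex; then the lowest common ancestor $\mathrm{lca}_N(x,y)$ (the minimal common ancestor w.r.t. the ancestor order) is unique. Labeled network: $t:V\to\{0,1,\odot\}$, $t(v)=\odot$ iff $v\in X$; it explains $G$ if $G$ is isomorphic to the graph on $X$ with $x\ne y$ adjacent iff $t(\mathrm{lca}_N(x,y))=1$. *)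

theory Defs
  imports Main
begin

definition simple_graph :: "'a set \<Rightarrow> ('a \<times> 'a) set \<Rightarrow> bool" where
  "simple_graph V E \<longleftrightarrow> finite V \<and> E \<subseteq> V \<times> V \<and> sym E \<and> irrefl E"

definition induced_subgraph_edges :: "('a \<times> 'a) set \<Rightarrow> 'a set \<Rightarrow> ('a \<times> 'a) set" where
  "induced_subgraph_edges E W = E \<inter> (W \<times> W)"

definition indeg :: "('v \<times> 'v) set \<Rightarrow> 'v \<Rightarrow> nat" where
  "indeg A v = card {u. (u, v) \<in> A}"

definition outdeg :: "('v \<times> 'v) set \<Rightarrow> 'v \<Rightarrow> nat" where
  "outdeg A v = card {w. (v, w) \<in> A}"

definition is_dag :: "'v set \<Rightarrow> ('v \<times> 'v) set \<Rightarrow> bool" where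
  "is_dag NV A \<longleftrightarrow> finite NV \<and> A \<subseteq> NV \<times> NV \<and> acyclic A"

definition hybrid :: "('v \<times> 'v) set \<Rightarrow> 'v \<Rightarrow> bool" where
  "hybrid A v \<longleftrightarrow> indeg A v = 2"

definition network :: "'v set \<Rightarrow> ('v \<times> 'v) set \<Rightarrow> 'v set \<Rightarrow> bool" where
  "network NV A X \<longleftrightarrow> is_dag NV A \<and> X \<subseteq> NV \<and>
     ((\<exists>x. NV = {x} \<and> X = {x}) \<or>
      ((\<exists>!r. r \<in> NV \<and> indeg A r = 0) \<and>
       (\<forall>r\<in>NV. indeg A r = 0 \<longrightarrow> outdeg A r \<ge> 2) \<and>
       (\<forall>v\<in>NV. v \<in> X \<longleftrightarrow> outdeg A v = 0 \<and> indeg A v = 1) \<and>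
       (\<forall>v\<in>NV. indeg A v \<noteq> 0 \<and> v \<notin> X \<longrightarrow>
           (indeg A v = 1 \<and> outdeg A v \<ge> 2) \<or> (indeg A v = 2 \<and> outdeg A v \<ge> 1))))"

definition undirected :: "('v \<times> 'v) set \<Rightarrow> ('v \<times> 'v) set" where
  "undirected A = A \<union> A\<inverse>"

definition connected_on :: "('v \<times> 'v) set \<Rightarrow> 'v set \<Rightarrow> bool" where
  "connected_on U S \<longleftrightarrow> (\<forall>x\<in>S. \<forall>y\<in>S. (x, y) \<in> (U \<inter> (S \<times> S))\<^sup>*)"

definition biconnected_on :: "('v \<times> 'v) set \<Rightarrow> 'v set \<Rightarrow> bool" where
  "biconnected_on U C \<longleftrightarrow> card C \<ge> 2 \<and> connected_on U C \<and>
     (\<forall>v\<in>C. connected_on U (C - {v}))"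

definition biconnected_component :: "'v set \<Rightarrow> ('v \<times> 'v) set \<Rightarrow> 'v set \<Rightarrow> bool" where
  "biconnected_component NV U C \<longleftrightarrow> C \<subseteq> NV \<and> biconnected_on U C \<and>
     (\<forall>D. C \<subset> D \<and> D \<subseteq> NV \<longrightarrow> \<not> biconnected_on U D)"

definition level1 :: "'v set \<Rightarrow> ('v \<times> 'v) set \<Rightarrow> bool" where
  "level1 NV A \<longleftrightarrow> (\<forall>C. biconnected_component NV (undirected A) C \<longrightarrow>
     card {v\<in>C. hybrid A v} \<le> 1)"

definition ancestor :: "('v \<times> 'v) set \<Rightarrow> 'v \<Rightarrow> 'v \<Rightarrow> bool" where
  "ancestor A u v \<longleftrightarrow> (u, v) \<in> A\<^sup>*"

definition common_ancestor :: "'v set \<Rightarrow> ('v \<times> 'v) set \<Rightarrow> 'v \<Rightarrow> 'v \<Rightarrow> 'v \<Rightarrow> bool" where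
  "common_ancestor NV A x y u \<longleftrightarrow> u \<in> NV \<and> ancestor A u x \<and> ancestor A u y"

definition is_lca :: "'v set \<Rightarrow> ('v \<times> 'v) set \<Rightarrow> 'v \<Rightarrow> 'v \<Rightarrow> 'v \<Rightarrow> bool" where
  "is_lca NV A x y u \<longleftrightarrow> common_ancestor NV A x y u \<and>
     (\<forall>w. common_ancestor NV A x y w \<and> ancestor A u w \<longrightarrow> w = u)"

definition lca :: "'v set \<Rightarrow> ('v \<times> 'v) set \<Rightarrow> 'v \<Rightarrow> 'v \<Rightarrow> 'v" where
  "lca NV A x y = (THE u. is_lca NV A x y u)"

datatype label = Zero | One | Odot

definition labeling :: "'v set \<Rightarrow> 'v set \<Rightarrow> ('v \<Rightarrow> label) \<Rightarrow> bool" where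
  "labeling NV X t \<longleftrightarrow> (\<forall>v\<in>NV. t v = Odot \<longleftrightarrow> v \<in> X)"

definition explains :: "'v set \<Rightarrow> ('v \<times> 'v) set \<Rightarrow> 'v set \<Rightarrow> ('v \<Rightarrow> label)
     \<Rightarrow> 'a set \<Rightarrow> ('a \<times> 'a) set \<Rightarrow> bool" where
  "explains NV A X t V E \<longleftrightarrow> (\<exists>f. bij_betw f V X \<and>
     (\<forall>a\<in>V. \<forall>b\<in>V. (a, b) \<in> E \<longleftrightarrow> f a \<noteq> f b \<and> t (lca NV A (f a) (f b)) = One))"

text \<open>G can be explained by a labeled level-1 network.  Network vertices are taken
  from nat; every finite network is isomorphic to one on nat.\<close>
definition level1_explainable :: "'a set \<Rightarrow> ('a \<times> 'a) set \<Rightarrow> bool" where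
  "level1_explainable V E \<longleftrightarrow> (\<exists>(NV :: nat set) A X t.
     network NV A X \<and> level1 NV A \<and> labeling NV X t \<and> explains NV A X t V E)"

end

theory Submission
  imports Defs
begin


lemma sym_undirected: "sym (undirected A)"
  unfolding undirected_def sym_def by auto

lemma sym_restr: "sym U \<Longrightarrow> sym (U \<inter> T \<times> T)"
  unfolding sym_def by auto

lemma rtrancl_sym_swap: "sym R \<Longrightarrow> (x,y) \<in> R\<^sup>* \<Longrightarrow> (y,x) \<in> R\<^sup>*"
  using sym_rtrancl by (metis symD)

lemma hub_connected:
  assumes "sym U" "\<forall>x\<in>T. (h,x) \<in> (U \<inter> T \<times> T)\<^sup>*"
  shows "connected_on U T"
  unfolding connected_on_def
proof (intro ballI)
  fix x y assume "x \<in> T" "y \<in> T"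
  then have "(h,x) \<in> (U \<inter> T \<times> T)\<^sup>*" "(h,y) \<in> (U \<inter> T \<times> T)\<^sup>*" using assms by auto
  moreover have "sym (U \<inter> T \<times> T)" using assms(1) by (rule sym_restr)
  ultimately show "(x,y) \<in> (U \<inter> T \<times> T)\<^sup>*"
    using rtrancl_sym_swap rtrancl_trans by metis
qed

lemma connected_on_cong:
  assumes "\<forall>x\<in>S. \<forall>y\<in>S. (x,y) \<in> U \<longleftrightarrow> (x,y) \<in> U'"
  shows "connected_on U S = connected_on U' S"
proof -
  have "U \<inter> S \<times> S = U' \<inter> S \<times> S" using assms by auto
  then show ?thesis unfolding connected_on_def by simp
qed

lemma biconnected_on_cong:
  assumes "\<forall>x\<in>C. \<forall>y\<in>C. (x,y) \<in> U \<longleftrightarrow> (x,y) \<in> U'"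
  shows "biconnected_on U C = biconnected_on U' C"
proof -
  have "\<And>S. S \<subseteq> C \<Longrightarrow> connected_on U S = connected_on U' S"
    using assms connected_on_cong by (metis subsetD)
  then show ?thesis unfolding biconnected_on_def by (metis Diff_subset order_refl)
qed

lemma connected_on_map:
  assumes "connected_on U S" "\<forall>x\<in>S. \<forall>y\<in>S. (x,y) \<in> U \<longrightarrow> (x,y) \<in> R\<^sup>*"
    "x \<in> S" "y \<in> S"
  shows "(x,y) \<in> R\<^sup>*"
proof -
  have "(x,y) \<in> (U \<inter> S \<times> S)\<^sup>*" using assms unfolding connected_on_def by auto
  moreover have "U \<inter> S \<times> S \<subseteq> R\<^sup>*" using assms(2) by auto
  ultimately show ?thesis by (metis rtrancl_subset_rtrancl subsetD)
qed

definition lvl :: "'v set \<Rightarrow> ('v \<times> 'v) set \<Rightarrow> bool" where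
  "lvl NV A \<longleftrightarrow> (\<forall>C. C \<subseteq> NV \<and> biconnected_on (undirected A) C \<longrightarrow> card {v\<in>C. hybrid A v} \<le> 1)"

lemma level1_lvl:
  assumes "finite NV" "level1 NV A"
  shows "lvl NV A"
  unfolding lvl_def
proof (intro allI impI)
  fix C assume C: "C \<subseteq> NV \<and> biconnected_on (undirected A) C"
  let ?D = "{D. C \<subseteq> D \<and> D \<subseteq> NV \<and> biconnected_on (undirected A) D}"
  have "?D \<subseteq> Pow NV" by auto
  then have fin: "finite ?D" by (rule finite_subset) (simp add: assms(1))
  have ne: "?D \<noteq> {}" using C by auto
  obtain D where D: "D \<in> ?D" "\<forall>b\<in>?D. D \<le> b \<longrightarrow> D = b"
    using finite_has_maximal[OF fin ne] by blast
  have "biconnected_component NV (undirected A) D"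
    unfolding biconnected_component_def
  proof (intro conjI allI impI)
    show "D \<subseteq> NV" "biconnected_on (undirected A) D" using D by auto
    fix D' assume "D \<subset> D' \<and> D' \<subseteq> NV"
    then show "\<not> biconnected_on (undirected A) D'" using D by auto
  qed
  then have "card {v\<in>D. hybrid A v} \<le> 1" using assms(2) unfolding level1_def by auto
  moreover have "finite {v\<in>D. hybrid A v}" 
    using D assms(1) by (metis (no_types, lifting) mem_Collect_eq rev_finite_subset subsetI)
  then have "card {v\<in>C. hybrid A v} \<le> card {v\<in>D. hybrid A v}"
    by (rule card_mono) (use D in auto)
  ultimately show "card {v\<in>C. hybrid A v} \<le> 1" by simp
qed

lemma lvl_level1: assumes "lvl NV A" shows "level1 NV A"
  unfolding level1_def
proof (intro allI impI)
  fix C assume "biconnected_component NV (undirected A) C"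
  then have "C \<subseteq> NV \<and> biconnected_on (undirected A) C" unfolding biconnected_component_def by simp
  then show "card {v\<in>C. hybrid A v} \<le> 1" using assms unfolding lvl_def by simp
qed

lemma lvl_sub:
  assumes "lvl NV A" "NV' \<subseteq> NV"
    "\<forall>x\<in>NV'. \<forall>y\<in>NV'. (x,y) \<in> undirected A' \<longleftrightarrow> (x,y) \<in> undirected A"
    "\<forall>v\<in>NV'. hybrid A' v \<longrightarrow> hybrid A v"
  shows "lvl NV' A'"
  unfolding lvl_def
proof (intro allI impI)
  fix C assume C: "C \<subseteq> NV' \<and> biconnected_on (undirected A') C"
  have "\<forall>x\<in>C. \<forall>y\<in>C. (x,y) \<in> undirected A' \<longleftrightarrow> (x,y) \<in> undirected A"
    using assms(3) C by blast
  then have "biconnected_on (undirected A) C"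
    using biconnected_on_cong[of C "undirected A'" "undirected A"] C by blast
  then have "card {v\<in>C. hybrid A v} \<le> 1" using assms(1,2) C unfolding lvl_def by blast
  moreover have "2 \<le> card C" using C unfolding biconnected_on_def by simp
  then have "finite C" using card.infinite[of C] by (cases "finite C") simp_all
  then have "finite {v\<in>C. hybrid A v}" by simp
  then have "card {v\<in>C. hybrid A' v} \<le> card {v\<in>C. hybrid A v}"
    by (rule card_mono) (use C assms(4) in blast)
  ultimately show "card {v\<in>C. hybrid A' v} \<le> 1" by simp
qed



fun dpath :: "('v \<times> 'v) set \<Rightarrow> 'v list \<Rightarrow> bool" where
  "dpath A [] = True"
| "dpath A [x] = True"
| "dpath A (x # y # xs) = ((x,y) \<in> A \<and> dpath A (y # xs))"

lemma dpath_append: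
  "dpath A (xs @ ys) \<longleftrightarrow> dpath A xs \<and> dpath A ys \<and> (xs \<noteq> [] \<longrightarrow> ys \<noteq> [] \<longrightarrow> (last xs, hd ys) \<in> A)"
proof (induction xs)
  case Nil then show ?case by simp
next
  case (Cons x xs) then show ?case by (cases xs; cases ys) auto
qed

lemma dpath_reach:
  assumes "dpath A P" "set P \<subseteq> T" "x \<in> set P"
  shows "(hd P, x) \<in> (A \<inter> T \<times> T)\<^sup>* \<and> (x, last P) \<in> (A \<inter> T \<times> T)\<^sup>*"
  using assms
proof (induction A P arbitrary: x rule: dpath.induct)
  case (1 A) then show ?case by simp
next
  case (2 A y) then show ?case by simp
next
  case (3 A u y xs)
  then have IH: "\<And>x. x \<in> set (y # xs) \<Longrightarrow> (y, x) \<in> (A \<inter> T \<times> T)\<^sup>* \<and> (x, last (y # xs)) \<in> (A \<inter> T \<times> T)\<^sup>*"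
    by simp
  have e: "(u,y) \<in> A \<inter> T \<times> T" using 3 by simp
  have ly: "(y, last (y # xs)) \<in> (A \<inter> T \<times> T)\<^sup>*" using IH[of y] by simp
  have l: "last (u # y # xs) = last (y # xs)" "hd (u # y # xs) = u" by simp_all
  show ?case
  proof (cases "x = u")
    case True
    then show ?thesis using l converse_rtrancl_into_rtrancl[OF e ly] by (metis rtrancl.rtrancl_refl)
  next
    case False
    then have "x \<in> set (y # xs)" using 3 by simp
    then show ?thesis using IH l converse_rtrancl_into_rtrancl[OF e] by metis
  qed
qed

lemma rtrancl_path_exists:
  assumes "(a,b) \<in> A\<^sup>*"
  shows "\<exists>P. P \<noteq> [] \<and> hd P = a \<and> last P = b \<and> dpath A P"
  using assms
proof (induction rule: rtrancl_induct)
  case base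
  then show ?case by (intro exI[of _ "[a]"]) simp
next
  case (step y z)
  then obtain P where P: "P \<noteq> []" "hd P = a" "last P = y" "dpath A P" by blast
  then have "dpath A (P @ [z])" using step by (simp add: dpath_append)
  then show ?case using P by (intro exI[of _ "P @ [z]"]) simp
qed

lemma dpath_trancl: "dpath A (x # xs) \<Longrightarrow> y \<in> set xs \<Longrightarrow> (x,y) \<in> A\<^sup>+"
proof (induction xs arbitrary: x)
  case Nil then show ?case by simp
next
  case (Cons u xs)
  then have "(x,u) \<in> A" "dpath A (u # xs)" by simp_all
  then show ?case using Cons by (metis set_ConsD trancl.r_into_trancl trancl_into_trancl2)
qed

lemma dpath_distinct: "acyclic A \<Longrightarrow> dpath A P \<Longrightarrow> distinct P"
proof (induction P)
  case Nil then show ?case by simp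
next
  case (Cons x xs)
  have "dpath A xs" using Cons.prems(2) by (cases xs) simp_all
  moreover have "x \<notin> set xs" using dpath_trancl[OF Cons.prems(2)] Cons.prems(1)
    unfolding acyclic_def by blast
  ultimately show ?case using Cons by simp
qed

lemma split_last_in:
  assumes "set P \<inter> B \<noteq> {}"
  shows "\<exists>xs z ys. P = xs @ z # ys \<and> z \<in> B \<and> set ys \<inter> B = {}"
  using assms
proof (induction P rule: rev_induct)
  case Nil then show ?case by simp
next
  case (snoc x xs)
  show ?case
  proof (cases "x \<in> B")
    case True then show ?thesis by (intro exI[of _ xs] exI[of _ x] exI[of _ "[]"]) simp
  next
    case False
    then have "set xs \<inter> B \<noteq> {}" using snoc.prems by auto
    then obtain as z ys where "xs = as @ z # ys" "z \<in> B" "set ys \<inter> B = {}" using snoc.IH by blast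
    then show ?thesis using False by (intro exI[of _ as] exI[of _ z] exI[of _ "ys @ [x]"]) simp
  qed
qed

lemma dir_to_undir:
  assumes "(x,y) \<in> (A \<inter> T \<times> T)\<^sup>*"
  shows "(x,y) \<in> (undirected A \<inter> T \<times> T)\<^sup>* \<and> (y,x) \<in> (undirected A \<inter> T \<times> T)\<^sup>*"
proof -
  have "A \<inter> T \<times> T \<subseteq> undirected A \<inter> T \<times> T" unfolding undirected_def by auto
  then have 1: "(x,y) \<in> (undirected A \<inter> T \<times> T)\<^sup>*" using assms rtrancl_mono by (meson subsetD)
  then show ?thesis using rtrancl_sym_swap[OF sym_restr[OF sym_undirected] 1] by simp
qed



abbreviation RU :: "('v \<times> 'v) set \<Rightarrow> 'v set \<Rightarrow> ('v \<times> 'v) set" where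
  "RU A T \<equiv> (undirected A \<inter> T \<times> T)\<^sup>*"

lemma pathU:
  assumes "dpath A P" "set P \<subseteq> T" "x \<in> set P"
  shows "(hd P, x) \<in> RU A T \<and> (x, hd P) \<in> RU A T \<and> (last P, x) \<in> RU A T \<and> (x, last P) \<in> RU A T"
proof -
  have a: "(hd P, x) \<in> (A \<inter> T \<times> T)\<^sup>*" and b: "(x, last P) \<in> (A \<inter> T \<times> T)\<^sup>*"
    using dpath_reach[OF assms] by simp_all
  show ?thesis using dir_to_undir[OF a] dir_to_undir[OF b] by simp
qed

lemma edgeU:
  assumes "(a,b) \<in> A" "a \<in> T" "b \<in> T"
  shows "(a,b) \<in> RU A T \<and> (b,a) \<in> RU A T"
proof -
  have "(a,b) \<in> A \<inter> T \<times> T" using assms by simp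
  then have "(a,b) \<in> (A \<inter> T \<times> T)\<^sup>*" by (rule r_into_rtrancl)
  then show ?thesis by (rule dir_to_undir)
qed

lemma dpath_tl: "dpath A (w # ys) \<Longrightarrow> dpath A ys"
  by (cases ys) simp_all

lemma theta_rem:
  assumes P: "dpath A P" "P \<noteq> []" "hd P = z" "distinct P"
    and Q: "dpath A Q" "Q \<noteq> []" "hd Q = z" "distinct Q"
    and PQ: "set P \<inter> set Q = {z}"
    and c: "(last P, c) \<in> A" "(last Q, c) \<in> A" "c \<notin> set P" "c \<notin> set Q"
    and w: "w \<in> set P" "w \<noteq> z"
  shows "connected_on (undirected A) ((set P \<union> set Q \<union> {c}) - {w})"
proof -
  let ?T = "(set P \<union> set Q \<union> {c}) - {w}"
  obtain xs ys where sp: "P = xs @ w # ys" using w(1) by (meson split_list)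
  have xsne: "xs \<noteq> []" using sp P(3) w(2) by auto
  have hxs: "hd xs = z" using sp P(3) xsne by simp
  have dxs: "distinct (xs @ w # ys)" using P(4) sp by simp
  have wxs: "w \<notin> set xs" and wys: "w \<notin> set ys" using dxs by auto
  have wQ: "w \<notin> set Q" using PQ w sp by auto
  have wc: "w \<noteq> c" using c(3) w(1) by auto
  have pxs: "dpath A xs" and pwys: "dpath A (w # ys)"
    using P(1) sp dpath_append[of A xs "w # ys"] by simp_all
  have pys: "dpath A ys" using pwys by (rule dpath_tl)
  have sxs: "set xs \<subseteq> ?T" using wxs sp by auto
  have sys: "set ys \<subseteq> ?T" using wys sp by auto
  have sQ: "set Q \<subseteq> ?T" using wQ by auto
  have cT: "c \<in> ?T" using wc by auto
  have lQT: "last Q \<in> ?T" using sQ Q(2) last_in_set by blast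
  have zc: "(z, c) \<in> RU A ?T"
  proof -
    have "(hd Q, last Q) \<in> RU A ?T" using pathU[OF Q(1) sQ, of "last Q"] Q(2) by simp
    moreover have "(last Q, c) \<in> RU A ?T" using edgeU[OF c(2) lQT cT] by simp
    ultimately show ?thesis using Q(3) by (metis rtrancl_trans)
  qed
  have "\<forall>x\<in>?T. (z, x) \<in> RU A ?T"
  proof
    fix x assume xT: "x \<in> ?T"
    then have "x \<in> set xs \<or> x \<in> set ys \<or> x \<in> set Q \<or> x = c" using sp by auto
    then show "(z, x) \<in> RU A ?T"
    proof (elim disjE)
      assume "x \<in> set xs" then show ?thesis using pathU[OF pxs sxs] hxs by metis
    next
      assume "x \<in> set Q" then show ?thesis using pathU[OF Q(1) sQ] Q(3) by metis
    next
      assume "x = c" then show ?thesis using zc by simp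
    next
      assume xys: "x \<in> set ys"
      then have ysne: "ys \<noteq> []" by auto
      then have lys: "last ys = last P" using sp by simp
      have lyT: "last P \<in> ?T" using lys ysne sys last_in_set by (metis subsetD)
      have "(c, last P) \<in> RU A ?T" using edgeU[OF c(1) lyT cT] by simp
      moreover have "(last P, x) \<in> RU A ?T" using pathU[OF pys sys xys] lys by simp
      ultimately show ?thesis using zc by (metis rtrancl_trans)
    qed
  qed
  then show ?thesis by (rule hub_connected[OF sym_undirected])
qed

lemma theta:
  assumes P: "dpath A P" "P \<noteq> []" "hd P = z" "distinct P"
    and Q: "dpath A Q" "Q \<noteq> []" "hd Q = z" "distinct Q"
    and PQ: "set P \<inter> set Q = {z}"
    and c: "(last P, c) \<in> A" "(last Q, c) \<in> A" "c \<notin> set P" "c \<notin> set Q"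
  shows "biconnected_on (undirected A) (set P \<union> set Q \<union> {c})"
proof -
  let ?S = "set P \<union> set Q \<union> {c}"
  have zP: "z \<in> set P" using P(2,3) by (metis list.set_sel(1))
  have zQ: "z \<in> set Q" using Q(2,3) by (metis list.set_sel(1))
  have zc: "z \<noteq> c" using zP c(3) by auto
  have card: "2 \<le> card ?S"
  proof -
    have "{z, c} \<subseteq> ?S" using zP by auto
    moreover have "finite ?S" by simp
    ultimately have "card {z,c} \<le> card ?S" by (rule card_mono[rotated])
    then show ?thesis using zc by simp
  qed
  have conn1: "\<forall>x\<in>set P \<union> set Q. (z, x) \<in> RU A T" if "set P \<subseteq> T" "set Q \<subseteq> T" for T
  proof
    fix x assume "x \<in> set P \<union> set Q"
    then show "(z, x) \<in> RU A T"
    proof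
      assume "x \<in> set P" then show ?thesis using pathU[OF P(1) that(1)] P(3) by simp
    next
      assume "x \<in> set Q" then show ?thesis using pathU[OF Q(1) that(2)] Q(3) by simp
    qed
  qed
  have conn: "connected_on (undirected A) ?S"
  proof -
    have sP: "set P \<subseteq> ?S" and sQ: "set Q \<subseteq> ?S" and cS: "c \<in> ?S" by auto
    have lQ: "last Q \<in> ?S" using Q(2) by simp
    have "(z, last Q) \<in> RU A ?S" using conn1[OF sP sQ] lQ Q(2) by simp
    moreover have "(last Q, c) \<in> RU A ?S" using edgeU[OF c(2) lQ cS] by simp
    ultimately have "(z, c) \<in> RU A ?S" by (rule rtrancl_trans)
    then have "\<forall>x\<in>?S. (z, x) \<in> RU A ?S" using conn1[OF sP sQ] by blast
    then show ?thesis by (rule hub_connected[OF sym_undirected])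
  qed
  have rem: "connected_on (undirected A) (?S - {w})" if wS: "w \<in> ?S" for w
  proof -
    consider "w = c" | "w = z" | "w \<in> set P" "w \<noteq> z" | "w \<in> set Q" "w \<noteq> z" using wS by blast
    then show ?thesis
    proof cases
      case 1
      then have eq: "?S - {w} = set P \<union> set Q" using c(3,4) by auto
      have "\<forall>x\<in>?S - {w}. (z, x) \<in> RU A (?S - {w})" using conn1[of "?S - {w}"] eq by simp
      then show ?thesis by (rule hub_connected[OF sym_undirected])
    next
      case 2
      let ?T = "?S - {w}"
      obtain P' where P': "P = z # P'" using P(2,3) by (cases P) auto
      obtain Q' where Q': "Q = z # Q'" using Q(2,3) by (cases Q) auto
      have zP': "z \<notin> set P'" using P(4) P' by simp
      have zQ': "z \<notin> set Q'" using Q(4) Q' by simp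
      have pP': "dpath A P'" using P(1) P' dpath_tl by simp
      have pQ': "dpath A Q'" using Q(1) Q' dpath_tl by simp
      have sP': "set P' \<subseteq> ?T" using zP' 2 P' by auto
      have sQ': "set Q' \<subseteq> ?T" using zQ' 2 Q' by auto
      have cT: "c \<in> ?T" using zc 2 by auto
      have "\<forall>x\<in>?T. (c, x) \<in> RU A ?T"
      proof
        fix x assume xT: "x \<in> ?T"
        then have "x \<in> set P' \<or> x \<in> set Q' \<or> x = c" using 2 P' Q' by auto
        then show "(c, x) \<in> RU A ?T"
        proof (elim disjE)
          assume xP: "x \<in> set P'"
          then have ne: "P' \<noteq> []" by auto
          then have l: "last P' = last P" using P' by simp
          then have lT: "last P \<in> ?T" using ne sP' last_in_set by (metis subsetD)
          have "(c, last P) \<in> RU A ?T" using edgeU[OF c(1) lT cT] by simp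
          moreover have "(last P, x) \<in> RU A ?T" using pathU[OF pP' sP' xP] l by simp
          ultimately show ?thesis by (rule rtrancl_trans)
        next
          assume xQ: "x \<in> set Q'"
          then have ne: "Q' \<noteq> []" by auto
          then have l: "last Q' = last Q" using Q' by simp
          then have lT: "last Q \<in> ?T" using ne sQ' last_in_set by (metis subsetD)
          have "(c, last Q) \<in> RU A ?T" using edgeU[OF c(2) lT cT] by simp
          moreover have "(last Q, x) \<in> RU A ?T" using pathU[OF pQ' sQ' xQ] l by simp
          ultimately show ?thesis by (rule rtrancl_trans)
        next
          assume "x = c" then show ?thesis by simp
        qed
      qed
      then show ?thesis by (rule hub_connected[OF sym_undirected])
    next
      case 3
      then show ?thesis by (intro theta_rem[OF P Q PQ c])
    next
      case 4
      have PQ': "set Q \<inter> set P = {z}" using PQ by blast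
      have eq: "set Q \<union> set P \<union> {c} = ?S" by blast
      show ?thesis using theta_rem[OF Q P PQ' c(2,1,4,3) 4] eq by simp
    qed
  qed
  show ?thesis unfolding biconnected_on_def using card conn rem by blast
qed



lemma RU_mono: "T \<subseteq> T' \<Longrightarrow> (x,y) \<in> RU A T \<Longrightarrow> (x,y) \<in> RU A T'"
proof -
  assume "T \<subseteq> T'" "(x,y) \<in> RU A T"
  moreover have "undirected A \<inter> T \<times> T \<subseteq> undirected A \<inter> T' \<times> T'" using \<open>T \<subseteq> T'\<close> by auto
  ultimately show ?thesis using rtrancl_mono by blast
qed

lemma reach_in: "r \<in> NV \<Longrightarrow> A \<subseteq> NV \<times> NV \<Longrightarrow> (r,x) \<in> A\<^sup>* \<Longrightarrow> x \<in> NV"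
proof -
  assume a: "r \<in> NV" "A \<subseteq> NV \<times> NV" "(r,x) \<in> A\<^sup>*"
  from a(3) show ?thesis
  proof (induction rule: rtrancl_induct)
    case base then show ?case using a(1) by simp
  next
    case (step y z) then show ?case using a(2) by blast
  qed
qed

lemma dpath_reachA:
  assumes "dpath A P" "x \<in> set P"
  shows "(hd P, x) \<in> A\<^sup>* \<and> (x, last P) \<in> A\<^sup>*"
  using dpath_reach[OF assms(1) subset_UNIV assms(2)] by simp

lemma acyc_no_back: "acyclic A \<Longrightarrow> (x,y) \<in> A \<Longrightarrow> (y,x) \<in> A\<^sup>* \<Longrightarrow> False"
  unfolding acyclic_def by (meson rtrancl_into_trancl2)

lemma cycle_through:
  assumes A: "A \<subseteq> NV \<times> NV" "acyclic A" "r \<in> NV"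
    and reach: "(r,v) \<in> A\<^sup>*" "(r,p) \<in> A\<^sup>*"
    and q: "{u. (u,v) \<in> A} = {q}"
    and cv: "{w. (v,w) \<in> A} = {c}"
    and p: "(p,c) \<in> A" "p \<noteq> v"
  shows "\<exists>C \<subseteq> NV. biconnected_on (undirected A) C \<and> q \<in> C \<and> c \<in> C"
proof -
  obtain P1 where P1: "P1 \<noteq> []" "hd P1 = r" "last P1 = v" "dpath A P1"
    using rtrancl_path_exists[OF reach(1)] by blast
  obtain P2 where P2: "P2 \<noteq> []" "hd P2 = r" "last P2 = p" "dpath A P2"
    using rtrancl_path_exists[OF reach(2)] by blast
  have "r \<in> set P1 \<inter> set P2" using P1 P2 by (metis IntI list.set_sel(1))
  then have ne1: "set P1 \<inter> set P2 \<noteq> {}" by blast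
  obtain xs z ys where s1: "P1 = xs @ z # ys" "z \<in> set P2" "set ys \<inter> set P2 = {}"
    using split_last_in[OF ne1] by blast
  have ne2: "set P2 \<inter> {z} \<noteq> {}" using s1(2) by blast
  obtain us z' ws where s2: "P2 = us @ z' # ws" "z' \<in> {z}" "set ws \<inter> {z} = {}"
    using split_last_in[OF ne2] by blast
  have s2': "P2 = us @ z # ws" "z \<notin> set ws" using s2 by auto
  let ?P = "z # ys" and ?Q = "z # ws"
  have dP: "dpath A ?P" using P1(4) s1(1) dpath_append[of A xs ?P] by simp
  have dQ: "dpath A ?Q" using P2(4) s2'(1) dpath_append[of A us ?Q] by simp
  have lP: "last ?P = v" using P1(3) s1(1) by simp
  have lQ: "last ?Q = p" using P2(3) s2'(1) by simp
  have distP: "distinct ?P" using dpath_distinct[OF A(2) dP] .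
  have distQ: "distinct ?Q" using dpath_distinct[OF A(2) dQ] .
  have PQ: "set ?P \<inter> set ?Q = {z}"
  proof -
    have "set ws \<subseteq> set P2" using s2'(1) by auto
    then have "set ys \<inter> set ws = {}" using s1(3) by blast
    moreover have "z \<notin> set ys" using s1(2,3) by blast
    ultimately show ?thesis by auto
  qed
  have vc: "(v,c) \<in> A" using cv by blast
  have reachP: "\<And>x. x \<in> set ?P \<Longrightarrow> (x, v) \<in> A\<^sup>*"
  proof -
    fix x assume "x \<in> set ?P"
    then show "(x, v) \<in> A\<^sup>*" using dpath_reachA[OF dP] lP by metis
  qed
  have reachQ: "\<And>x. x \<in> set ?Q \<Longrightarrow> (x, p) \<in> A\<^sup>*"
  proof -
    fix x assume "x \<in> set ?Q"
    then show "(x, p) \<in> A\<^sup>*" using dpath_reachA[OF dQ] lQ by metis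
  qed
  have cP: "c \<notin> set ?P" using reachP acyc_no_back[OF A(2) vc] by blast
  have cQ: "c \<notin> set ?Q" using reachQ acyc_no_back[OF A(2) p(1)] by blast
  have bic: "biconnected_on (undirected A) (set ?P \<union> set ?Q \<union> {c})"
  proof -
    have e1: "(last ?P, c) \<in> A" using lP vc by metis
    have e2: "(last ?Q, c) \<in> A" using lQ p(1) by metis
    show ?thesis by (rule theta[OF dP _ _ distP dQ _ _ distQ PQ e1 e2 cP cQ]) simp_all
  qed
  have inNV: "set ?P \<union> set ?Q \<union> {c} \<subseteq> NV"
  proof -
    have "\<And>x. x \<in> set P1 \<Longrightarrow> x \<in> NV"
    proof -
      fix x assume "x \<in> set P1"
      then have "(hd P1, x) \<in> A\<^sup>*" using dpath_reachA[OF P1(4)] by blast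
      then show "x \<in> NV" using reach_in[OF A(3) A(1)] P1(2) by simp
    qed
    moreover have "\<And>x. x \<in> set P2 \<Longrightarrow> x \<in> NV"
    proof -
      fix x assume "x \<in> set P2"
      then have "(hd P2, x) \<in> A\<^sup>*" using dpath_reachA[OF P2(4)] by blast
      then show "x \<in> NV" using reach_in[OF A(3) A(1)] P2(2) by simp
    qed
    moreover have "c \<in> NV" using vc A(1) by blast
    ultimately show ?thesis using s1(1) s2'(1) by auto
  qed
  have ysne: "ys \<noteq> []"
  proof
    assume "ys = []"
    then have "z = v" using lP by simp
    then have "(v, p) \<in> A\<^sup>*" using reachQ by simp
    then have "(v, p) \<in> A\<^sup>+" using p(2) rtrancl_eq_or_trancl[of v p A] by simp
    then obtain w where w: "(v,w) \<in> A" "(w,p) \<in> A\<^sup>*" by (meson tranclD)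
    have "w \<in> {w. (v,w) \<in> A}" using w(1) by simp
    then have "w = c" using cv by simp
    then have "(c,p) \<in> A\<^sup>*" using w(2) by simp
    then show False using acyc_no_back[OF A(2) p(1)] by blast
  qed
  have qP: "q \<in> set ?P"
  proof -
    have eq: "?P = butlast ?P @ [v]" using lP by (metis append_butlast_last_id list.distinct(1))
    have bne: "butlast ?P \<noteq> []" using ysne by simp
    have "dpath A (butlast ?P @ [v])" using dP eq by simp
    then have "(last (butlast ?P), v) \<in> A" using bne dpath_append[of A "butlast ?P" "[v]"] by simp
    then have "last (butlast ?P) = q" using q by blast
    moreover have "last (butlast ?P) \<in> set ?P" using bne by (metis in_set_butlastD last_in_set)
    ultimately show ?thesis by simp
  qed
  show ?thesis using bic inNV qP by blast
qed

lemma not_two_hybrids: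
  assumes lvl: "lvl NV A" and A: "A \<subseteq> NV \<times> NV" "acyclic A" "r \<in> NV"
    and reach: "\<forall>x\<in>NV. (r,x) \<in> A\<^sup>*"
    and q: "{u. (u,v) \<in> A} = {q}"
    and cv: "{w. (v,w) \<in> A} = {c}"
  shows "\<not> (hybrid A q \<and> hybrid A c)"
proof
  assume h: "hybrid A q \<and> hybrid A c"
  have vc: "(v,c) \<in> A" using cv by blast
  have qv: "(q,v) \<in> A" using q by blast
  have cNV: "c \<in> NV" and vNV: "v \<in> NV" using vc A(1) by auto
  have c2: "card {u. (u,c) \<in> A} = 2" using h unfolding hybrid_def indeg_def by simp
  have "\<not> {u. (u,c) \<in> A} \<subseteq> {v}"
  proof
    assume "{u. (u,c) \<in> A} \<subseteq> {v}"
    then have "card {u. (u,c) \<in> A} \<le> card {v}" by (intro card_mono) simp_all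
    then show False using c2 by simp
  qed
  then obtain p where p: "(p,c) \<in> A" "p \<noteq> v" by blast
  have pNV: "p \<in> NV" using p A(1) by auto
  obtain C where C: "C \<subseteq> NV" "biconnected_on (undirected A) C" "q \<in> C" "c \<in> C"
    using cycle_through[OF A reach[rule_format, OF vNV] reach[rule_format, OF pNV] q cv p] by blast
  have qc: "q \<noteq> c" using qv vc acyc_no_back[OF A(2)] by blast
  have fin: "finite C" using C(2) unfolding biconnected_on_def using card.infinite[of C] by (cases "finite C") simp_all
  have "{q,c} \<subseteq> {x\<in>C. hybrid A x}" using C h by auto
  then have "card {q,c} \<le> card {x\<in>C. hybrid A x}" using fin by (intro card_mono) simp_all
  then have "2 \<le> card {x\<in>C. hybrid A x}" using qc by simp
  moreover have "card {x\<in>C. hybrid A x} \<le> 1" using lvl C unfolding lvl_def by blast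
  ultimately show False by simp
qed



lemma lvl_contract:
  assumes lvl: "lvl NV A" and A: "A \<subseteq> NV \<times> NV"
    and v: "v \<in> NV" "q \<in> NV" "c \<in> NV" "q \<noteq> v" "c \<noteq> v" "q \<noteq> c"
    and qv: "(q,v) \<in> A" and vc: "(v,c) \<in> A"
    and hyb: "\<forall>x\<in>NV-{v}. hybrid A' x \<longleftrightarrow> hybrid A x"
    and nh: "\<not> (hybrid A q \<and> hybrid A c)"
    and A': "A' = (A \<inter> (NV-{v}) \<times> (NV-{v})) \<union> {(q,c)}"
  shows "lvl (NV-{v}) A'"
  unfolding lvl_def
proof (intro allI impI)
  let ?U = "undirected A" and ?U' = "undirected A'"
  have K1: "\<And>x y. x \<in> NV-{v} \<Longrightarrow> y \<in> NV-{v} \<Longrightarrow>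
     (x,y) \<in> ?U' \<longleftrightarrow> (x,y) \<in> ?U \<or> (x = q \<and> y = c) \<or> (x = c \<and> y = q)"
    unfolding undirected_def A' by auto
  have qvU: "(q,v) \<in> ?U" "(v,q) \<in> ?U" and vcU: "(v,c) \<in> ?U" "(c,v) \<in> ?U"
    using qv vc unfolding undirected_def by auto
  have F: "\<And>T. T \<subseteq> NV-{v} \<Longrightarrow> \<not> (q \<in> T \<and> c \<in> T) \<Longrightarrow>
      \<forall>x\<in>T. \<forall>y\<in>T. (x,y) \<in> ?U' \<longleftrightarrow> (x,y) \<in> ?U"
  proof -
    fix T assume T: "T \<subseteq> NV-{v}" "\<not> (q \<in> T \<and> c \<in> T)"
    show "\<forall>x\<in>T. \<forall>y\<in>T. (x,y) \<in> ?U' \<longleftrightarrow> (x,y) \<in> ?U"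
    proof (intro ballI)
      fix x y assume "x \<in> T" "y \<in> T"
      then show "(x,y) \<in> ?U' \<longleftrightarrow> (x,y) \<in> ?U" using K1[of x y] T by auto
    qed
  qed
  have Fc: "\<And>T. T \<subseteq> NV-{v} \<Longrightarrow> \<not> (q \<in> T \<and> c \<in> T) \<Longrightarrow> connected_on ?U' T \<Longrightarrow> connected_on ?U T"
    using F connected_on_cong by metis
  have M: "\<And>T x y. T \<subseteq> NV-{v} \<Longrightarrow> q \<in> T \<Longrightarrow> c \<in> T \<Longrightarrow> connected_on ?U' T \<Longrightarrow> x \<in> T \<Longrightarrow> y \<in> T \<Longrightarrow>
      (x,y) \<in> RU A (insert v T)"
  proof -
    fix T x y assume T: "T \<subseteq> NV-{v}" "q \<in> T" "c \<in> T" "connected_on ?U' T" "x \<in> T" "y \<in> T"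
    have "\<forall>x\<in>T. \<forall>y\<in>T. (x,y) \<in> ?U' \<longrightarrow> (x,y) \<in> RU A (insert v T)"
    proof (intro ballI impI)
      fix a b assume ab: "a \<in> T" "b \<in> T" "(a,b) \<in> ?U'"
      then have "(a,b) \<in> ?U \<or> (a = q \<and> b = c) \<or> (a = c \<and> b = q)" using K1[of a b] T(1) by auto
      then show "(a,b) \<in> RU A (insert v T)"
      proof (elim disjE)
        assume "(a,b) \<in> ?U"
        then have "(a,b) \<in> ?U \<inter> (insert v T) \<times> (insert v T)" using ab by simp
        then show ?thesis by (rule r_into_rtrancl)
      next
        assume "a = q \<and> b = c"
        then have "(a,v) \<in> ?U \<inter> (insert v T) \<times> (insert v T)" "(v,b) \<in> ?U \<inter> (insert v T) \<times> (insert v T)"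
          using qvU vcU ab by auto
        then show ?thesis by (meson r_into_rtrancl rtrancl_into_rtrancl)
      next
        assume "a = c \<and> b = q"
        then have "(a,v) \<in> ?U \<inter> (insert v T) \<times> (insert v T)" "(v,b) \<in> ?U \<inter> (insert v T) \<times> (insert v T)"
          using qvU vcU ab by auto
        then show ?thesis by (meson r_into_rtrancl rtrancl_into_rtrancl)
      qed
    qed
    then show "(x,y) \<in> RU A (insert v T)" using connected_on_map[OF T(4) _ T(5,6)] by blast
  qed
  fix C assume C: "C \<subseteq> NV-{v} \<and> biconnected_on ?U' C"
  have Csub: "C \<subseteq> NV-{v}" and bic: "biconnected_on ?U' C" using C by auto
  have card2: "2 \<le> card C" and conC: "connected_on ?U' C" and remC: "\<forall>w\<in>C. connected_on ?U' (C - {w})"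
    using bic unfolding biconnected_on_def by auto
  have finC: "finite C" using card2 card.infinite[of C] by (cases "finite C") simp_all
  have hybC: "{x\<in>C. hybrid A' x} = {x\<in>C. hybrid A x}" using hyb Csub by auto
  consider "\<not> (q \<in> C \<and> c \<in> C)" | "q \<in> C" "c \<in> C" "card C = 2" | "q \<in> C" "c \<in> C" "3 \<le> card C"
    using card2 by linarith
  then show "card {x\<in>C. hybrid A' x} \<le> 1"
  proof cases
    case 1
    then have "biconnected_on ?U C" using biconnected_on_cong[of C ?U' ?U] F[OF Csub 1] bic by simp
    then show ?thesis using lvl Csub hybC unfolding lvl_def by auto
  next
    case 2
    have "{q,c} \<subseteq> C" using 2 by simp
    moreover have "card {q,c} = card C" using 2 v(6) by simp
    ultimately have Ceq: "C = {q,c}" using finC card_subset_eq by blast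
    have "{x\<in>C. hybrid A' x} \<subseteq> {q} \<or> {x\<in>C. hybrid A' x} \<subseteq> {c}" using hybC Ceq nh by auto
    then show ?thesis
    proof (elim disjE)
      assume "{x\<in>C. hybrid A' x} \<subseteq> {q}"
      then have "card {x\<in>C. hybrid A' x} \<le> card {q}" by (intro card_mono) simp_all
      then show ?thesis by simp
    next
      assume "{x\<in>C. hybrid A' x} \<subseteq> {c}"
      then have "card {x\<in>C. hybrid A' x} \<le> card {c}" by (intro card_mono) simp_all
      then show ?thesis by simp
    qed
  next
    case 3
    have qC: "q \<in> C" and cC: "c \<in> C" and c3: "3 \<le> card C" using 3 by auto
    let ?C = "insert v C"
    have vC: "v \<notin> C" using Csub by auto
    have M': "\<And>T x y. T \<subseteq> C \<Longrightarrow> q \<in> T \<Longrightarrow> c \<in> T \<Longrightarrow> connected_on ?U' T \<Longrightarrow> x \<in> T \<Longrightarrow> y \<in> T \<Longrightarrow>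
      (x,y) \<in> RU A (insert v T)"
    proof -
      fix T x y assume a: "T \<subseteq> C" "q \<in> T" "c \<in> T" "connected_on ?U' T" "x \<in> T" "y \<in> T"
      show "(x,y) \<in> RU A (insert v T)" by (rule M[OF subset_trans[OF a(1) Csub] a(2-6)])
    qed
    have Fc': "\<And>T. T \<subseteq> C \<Longrightarrow> \<not> (q \<in> T \<and> c \<in> T) \<Longrightarrow> connected_on ?U' T \<Longrightarrow> connected_on ?U T"
    proof -
      fix T assume a: "T \<subseteq> C" "\<not> (q \<in> T \<and> c \<in> T)" "connected_on ?U' T"
      show "connected_on ?U T" by (rule Fc[OF subset_trans[OF a(1) Csub] a(2,3)])
    qed
    have e1: "\<And>T. q \<in> T \<Longrightarrow> (q,v) \<in> RU A (insert v T) \<and> (v,q) \<in> RU A (insert v T)"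
      using qvU by (simp add: r_into_rtrancl)
    have e2: "\<And>T. c \<in> T \<Longrightarrow> (c,v) \<in> RU A (insert v T) \<and> (v,c) \<in> RU A (insert v T)"
      using vcU by (simp add: r_into_rtrancl)
    have hub: "\<And>T h. (\<forall>x\<in>T. (h,x) \<in> RU A T) \<Longrightarrow> connected_on ?U T"
      by (rule hub_connected[OF sym_undirected])
    have b1: "2 \<le> card ?C" using qC cC c3 finC vC by simp
    have b2: "connected_on ?U ?C"
    proof -
      have "\<forall>x\<in>?C. (q,x) \<in> RU A ?C"
      proof
        fix x assume "x \<in> ?C"
        then consider "x = v" | "x \<in> C" by blast
        then show "(q,x) \<in> RU A ?C"
        proof cases
          case 1 then show ?thesis using e1[of C] qC cC c3 by simp
        next
          case 2 then show ?thesis using M'[of C q x] qC cC c3 conC by simp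
        qed
      qed
      then show ?thesis by (rule hub)
    qed
    have b3: "connected_on ?U (?C - {w})" if wC: "w \<in> ?C" for w
    proof -
      consider "w = v" | "w = q" | "w = c" | "w \<in> C" "w \<noteq> q" "w \<noteq> c" using wC by blast
      then show ?thesis
      proof cases
        case 1
        then have eq: "?C - {w} = C" using vC by simp
        obtain w0 where w0: "w0 \<in> C" "w0 \<noteq> q" "w0 \<noteq> c"
        proof -
          have "\<not> C \<subseteq> {q,c}"
          proof
            assume "C \<subseteq> {q,c}"
            then have "card C \<le> card {q,c}" by (intro card_mono) simp_all
            moreover have "card {q,c} = 2" using v(6) by simp
            ultimately show False using c3 by linarith
          qed
          then show ?thesis using that by blast
        qed
        have c1: "connected_on ?U (C - {q})" using Fc'[of "C - {q}"] remC qC cC c3 by auto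
        have c2: "connected_on ?U (C - {c})" using Fc'[of "C - {c}"] remC qC cC c3 by auto
        have "\<forall>x\<in>C. (c,x) \<in> RU A C"
        proof
          fix x assume xC: "x \<in> C"
          show "(c,x) \<in> RU A C"
          proof (cases "x = q")
            case False
            then have "(c,x) \<in> RU A (C - {q})" using c1 xC qC cC c3 v(6) unfolding connected_on_def by auto
            then show ?thesis using RU_mono[of "C - {q}" C] by blast
          next
            case True
            have "(c,w0) \<in> RU A (C - {q})" using c1 w0 qC cC c3 v(6) unfolding connected_on_def by auto
            then have a: "(c,w0) \<in> RU A C" using RU_mono[of "C - {q}" C] by blast
            have "(w0,q) \<in> RU A (C - {c})" using c2 w0 qC cC c3 v(6) unfolding connected_on_def by auto
            then have b: "(w0,q) \<in> RU A C" using RU_mono[of "C - {c}" C] by blast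
            show ?thesis using True rtrancl_trans[OF a b] by simp
          qed
        qed
        then show ?thesis using eq hub by metis
      next
        case 2
        have eq: "?C - {w} = insert v (C - {q})" using 2 v(4) by auto
        have c1: "connected_on ?U (C - {q})" using Fc'[of "C - {q}"] remC qC cC c3 by auto
        have "\<forall>x\<in>insert v (C - {q}). (c,x) \<in> RU A (insert v (C - {q}))"
        proof
          fix x assume "x \<in> insert v (C - {q})"
          then consider "x = v" | "x \<in> C - {q}" by blast
          then show "(c,x) \<in> RU A (insert v (C - {q}))"
          proof cases
            case 1 then show ?thesis using e2[of "C - {q}"] qC cC c3 v(6) by simp
          next
            case 2
            then have "(c,x) \<in> RU A (C - {q})" using c1 qC cC c3 v(6) unfolding connected_on_def by auto
            then show ?thesis using RU_mono[of "C - {q}" "insert v (C - {q})"] by blast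
          qed
        qed
        then show ?thesis using eq hub by metis
      next
        case 3
        have eq: "?C - {w} = insert v (C - {c})" using 3 v(5) by auto
        have c2: "connected_on ?U (C - {c})" using Fc'[of "C - {c}"] remC qC cC c3 by auto
        have "\<forall>x\<in>insert v (C - {c}). (q,x) \<in> RU A (insert v (C - {c}))"
        proof
          fix x assume "x \<in> insert v (C - {c})"
          then consider "x = v" | "x \<in> C - {c}" by blast
          then show "(q,x) \<in> RU A (insert v (C - {c}))"
          proof cases
            case 1 then show ?thesis using e1[of "C - {c}"] qC cC c3 v(6) by simp
          next
            case 2
            then have "(q,x) \<in> RU A (C - {c})" using c2 qC cC c3 v(6) unfolding connected_on_def by auto
            then show ?thesis using RU_mono[of "C - {c}" "insert v (C - {c})"] by blast
          qed
        qed
        then show ?thesis using eq hub by metis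
      next
        case 4
        have eq: "?C - {w} = insert v (C - {w})" using 4 wC vC by auto
        have cw: "connected_on ?U' (C - {w})" using remC 4 by auto
        have "\<forall>x\<in>insert v (C - {w}). (q,x) \<in> RU A (insert v (C - {w}))"
        proof
          fix x assume "x \<in> insert v (C - {w})"
          then consider "x = v" | "x \<in> C - {w}" by blast
          then show "(q,x) \<in> RU A (insert v (C - {w}))"
          proof cases
            case 1 then show ?thesis using e1[of "C - {w}"] qC cC c3 4 by simp
          next
            case 2 then show ?thesis using M'[of "C - {w}" q x] qC cC c3 4 cw by auto
          qed
        qed
        then show ?thesis using eq hub by metis
      qed
    qed
    have "biconnected_on ?U ?C" unfolding biconnected_on_def using b1 b2 b3 by blast
    moreover have "?C \<subseteq> NV" using Csub v(1) by auto
    ultimately have "card {x\<in>?C. hybrid A x} \<le> 1" using lvl unfolding lvl_def by blast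
    moreover have "card {x\<in>C. hybrid A x} \<le> card {x\<in>?C. hybrid A x}"
      using finC by (intro card_mono) auto
    ultimately show ?thesis using hybC by simp
  qed
qed



definition prenet :: "'v set \<Rightarrow> ('v \<times> 'v) set \<Rightarrow> 'v set \<Rightarrow> 'v \<Rightarrow> bool" where
  "prenet NV A X r \<longleftrightarrow> finite NV \<and> A \<subseteq> NV \<times> NV \<and> acyclic A \<and> r \<in> NV \<and> indeg A r = 0 \<and>
     (\<forall>v\<in>NV. (r,v) \<in> A\<^sup>*) \<and> X \<subseteq> NV \<and> (\<forall>v\<in>NV. v \<in> X \<longleftrightarrow> outdeg A v = 0) \<and>
     (\<forall>v\<in>X. indeg A v = 1) \<and> (\<forall>v\<in>NV. v \<noteq> r \<longrightarrow> indeg A v = 1 \<or> indeg A v = 2) \<and> lvl NV A"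

definition same_lca :: "'v set \<Rightarrow> ('v \<times> 'v) set \<Rightarrow> 'v set \<Rightarrow> ('v \<times> 'v) set \<Rightarrow> 'v set \<Rightarrow> bool" where
  "same_lca NV A NV' A' X \<longleftrightarrow> (\<forall>x\<in>X. \<forall>y\<in>X. \<forall>u. is_lca NV A x y u \<longleftrightarrow> is_lca NV' A' x y u)"

lemma same_lca_refl: "same_lca NV A NV A X"
  unfolding same_lca_def by simp

lemma same_lca_trans: "same_lca N1 A1 N2 A2 X \<Longrightarrow> same_lca N2 A2 N3 A3 X \<Longrightarrow> same_lca N1 A1 N3 A3 X"
  unfolding same_lca_def by simp

lemma fin_pred: "finite NV \<Longrightarrow> A \<subseteq> NV \<times> NV \<Longrightarrow> finite {u. (u,v) \<in> A}"
  by (erule finite_subset[rotated]) blast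

lemma fin_succ: "finite NV \<Longrightarrow> A \<subseteq> NV \<times> NV \<Longrightarrow> finite {w. (v,w) \<in> A}"
  by (erule finite_subset[rotated]) blast

lemma prenet_fin:
  assumes "prenet NV A X r"
  shows "finite {u. (u,v) \<in> A}" "finite {w. (v,w) \<in> A}"
proof -
  have "finite NV" "A \<subseteq> NV \<times> NV" using assms unfolding prenet_def by simp_all
  then show "finite {u. (u,v) \<in> A}" "finite {w. (v,w) \<in> A}" by (rule fin_pred, rule fin_succ)
qed

lemma succ_step:
  assumes "{w. (v,w) \<in> A} = {c}" "(v,x) \<in> A\<^sup>*" "x \<noteq> v"
  shows "(c,x) \<in> A\<^sup>*"
proof -
  have "(v,x) \<in> A\<^sup>+" using assms(2,3) rtrancl_eq_or_trancl[of v x A] by simp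
  then obtain w where w: "(v,w) \<in> A" "(w,x) \<in> A\<^sup>*" by (meson tranclD)
  have "w \<in> {w. (v,w) \<in> A}" using w(1) by simp
  then have "w = c" using assms(1) by simp
  then show ?thesis using w(2) by simp
qed

lemma acyc_antisym: "acyclic A \<Longrightarrow> (a,b) \<in> A\<^sup>* \<Longrightarrow> (b,a) \<in> A\<^sup>* \<Longrightarrow> a = b"
proof (rule ccontr)
  assume a: "acyclic A" "(a,b) \<in> A\<^sup>*" "(b,a) \<in> A\<^sup>*" "a \<noteq> b"
  then have "(a,b) \<in> A\<^sup>+" using rtrancl_eq_or_trancl[of a b A] by simp
  then have "(a,a) \<in> A\<^sup>+" using a(3) by (rule trancl_rtrancl_trancl)
  then show False using a(1) unfolding acyclic_def by blast
qed

lemma same_lca_remove: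
  assumes acyc: "acyclic A" and sub: "NV' \<subseteq> NV" "X \<subseteq> NV'"
    and anc: "\<forall>u\<in>NV'. \<forall>w\<in>NV'. (u,w) \<in> A\<^sup>* \<longleftrightarrow> (u,w) \<in> A'\<^sup>*"
    and rem: "\<forall>w\<in>NV-NV'. \<forall>x\<in>X. \<forall>y\<in>X. common_ancestor NV A x y w \<longrightarrow>
              (\<exists>w'\<in>NV'. (w,w') \<in> A\<^sup>* \<and> common_ancestor NV A x y w')"
  shows "same_lca NV A NV' A' X"
  unfolding same_lca_def
proof (intro ballI allI)
  fix x y u assume xy: "x \<in> X" "y \<in> X"
  have xyN: "x \<in> NV'" "y \<in> NV'" using xy sub by auto
  have ca: "common_ancestor NV A x y w \<longleftrightarrow> common_ancestor NV' A' x y w" if "w \<in> NV'" for w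
    using that anc xyN sub unfolding common_ancestor_def ancestor_def by auto
  show "is_lca NV A x y u \<longleftrightarrow> is_lca NV' A' x y u"
  proof
    assume L: "is_lca NV A x y u"
    then have cu: "common_ancestor NV A x y u" and
      mn: "\<And>w. common_ancestor NV A x y w \<Longrightarrow> (u,w) \<in> A\<^sup>* \<Longrightarrow> w = u"
      unfolding is_lca_def ancestor_def by auto
    have uN: "u \<in> NV'"
    proof (rule ccontr)
      assume "u \<notin> NV'"
      moreover have "u \<in> NV" using cu unfolding common_ancestor_def by simp
      ultimately obtain w' where "w' \<in> NV'" "(u,w') \<in> A\<^sup>*" "common_ancestor NV A x y w'"
        using rem xy cu by blast
      then show False using mn \<open>u \<notin> NV'\<close> by blast
    qed
    show "is_lca NV' A' x y u"
      unfolding is_lca_def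
    proof (intro conjI allI impI)
      show "common_ancestor NV' A' x y u" using ca[OF uN] cu by simp
      fix w assume "common_ancestor NV' A' x y w \<and> ancestor A' u w"
      then have w: "common_ancestor NV' A' x y w" "(u,w) \<in> A'\<^sup>*" unfolding ancestor_def by auto
      have wN: "w \<in> NV'" using w(1) unfolding common_ancestor_def by simp
      have "common_ancestor NV A x y w" using ca[OF wN] w(1) by simp
      moreover have "(u,w) \<in> A\<^sup>*" using anc uN wN w(2) by blast
      ultimately show "w = u" using mn by blast
    qed
  next
    assume R: "is_lca NV' A' x y u"
    then have cu: "common_ancestor NV' A' x y u" and
      mn: "\<And>w. common_ancestor NV' A' x y w \<Longrightarrow> (u,w) \<in> A'\<^sup>* \<Longrightarrow> w = u"
      unfolding is_lca_def ancestor_def by auto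
    have uN: "u \<in> NV'" using cu unfolding common_ancestor_def by simp
    show "is_lca NV A x y u"
      unfolding is_lca_def
    proof (intro conjI allI impI)
      show cuA: "common_ancestor NV A x y u" using ca[OF uN] cu by simp
      fix w assume "common_ancestor NV A x y w \<and> ancestor A u w"
      then have w: "common_ancestor NV A x y w" "(u,w) \<in> A\<^sup>*" unfolding ancestor_def by auto
      show "w = u"
      proof (cases "w \<in> NV'")
        case True
        then have "(u,w) \<in> A'\<^sup>*" using anc uN w(2) by blast
        then show ?thesis using mn ca[OF True] w(1) by blast
      next
        case False
        have "w \<in> NV" using w(1) unfolding common_ancestor_def by simp
        then obtain w' where w': "w' \<in> NV'" "(w,w') \<in> A\<^sup>*" "common_ancestor NV A x y w'"
          using rem xy w(1) False by blast
        have "(u,w') \<in> A\<^sup>*" using w(2) w'(2) by (rule rtrancl_trans)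
        then have "(u,w') \<in> A'\<^sup>*" using anc uN w'(1) by blast
        then have "w' = u" using mn ca[OF w'(1)] w'(3) by blast
        then show ?thesis using acyc_antisym[OF acyc w(2)] w'(2) by simp
      qed
    qed
  qed
qed

lemma reach_pres:
  assumes "(u,w) \<in> A\<^sup>*" "u \<noteq> v"
    and predv: "\<forall>x. (x,v) \<in> A \<longrightarrow> x = q" and succv: "\<forall>y. (v,y) \<in> A \<longrightarrow> y = c"
    and qc: "(q,c) \<in> A'\<^sup>*" and qv: "q \<noteq> v"
    and other: "\<forall>a b. (a,b) \<in> A \<longrightarrow> a \<noteq> v \<longrightarrow> b \<noteq> v \<longrightarrow> (a,b) \<in> A'"
  shows "(w \<noteq> v \<longrightarrow> (u,w) \<in> A'\<^sup>*) \<and> (w = v \<longrightarrow> (u,q) \<in> A'\<^sup>*)"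
  using assms(1)
proof (induction rule: rtrancl_induct)
  case base then show ?case using assms(2) by simp
next
  case (step w w')
  show ?case
  proof (cases "w' = v")
    case True
    then have "w = q" using predv step(2) by simp
    then show ?thesis using step(3) qv True by simp
  next
    case False
    show ?thesis
    proof (cases "w = v")
      case True
      then have "w' = c" using succv step(2) by simp
      then show ?thesis using step(3) True qc False by (meson rtrancl_trans)
    next
      case False2: False
      then have "(w,w') \<in> A'" using other step(2) \<open>w' \<noteq> v\<close> by simp
      then show ?thesis using step(3) False2 \<open>w' \<noteq> v\<close> by (meson rtrancl.rtrancl_into_rtrancl)
    qed
  qed
qed

lemma prenet_indeg_le2: "prenet NV A X r \<Longrightarrow> u \<in> NV \<Longrightarrow> indeg A u \<le> 2"
  unfolding prenet_def by (cases "u = r") auto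

lemma del_pred: "A \<subseteq> NV \<times> NV \<Longrightarrow> u \<in> NV - {v} \<Longrightarrow>
   {x. (x,u) \<in> A \<inter> (NV-{v}) \<times> (NV-{v})} = {x. (x,u) \<in> A} - {v}"
  by auto

lemma del_succ: "A \<subseteq> NV \<times> NV \<Longrightarrow> u \<in> NV - {v} \<Longrightarrow>
   {x. (u,x) \<in> A \<inter> (NV-{v}) \<times> (NV-{v})} = {x. (u,x) \<in> A} - {v}"
  by auto

lemma lvl_del:
  assumes P: "prenet NV A X r"
  shows "lvl (NV-{v}) (A \<inter> (NV-{v}) \<times> (NV-{v}))"
proof (rule lvl_sub)
  have PA: "A \<subseteq> NV \<times> NV" and PL: "lvl NV A" using P unfolding prenet_def by auto
  show "lvl NV A" by (rule PL)
  show "NV - {v} \<subseteq> NV" by auto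
  show "\<forall>x\<in>NV - {v}. \<forall>y\<in>NV - {v}. (x, y) \<in> undirected (A \<inter> (NV-{v}) \<times> (NV-{v})) \<longleftrightarrow> (x, y) \<in> undirected A"
    unfolding undirected_def by auto
  show "\<forall>u\<in>NV - {v}. hybrid (A \<inter> (NV-{v}) \<times> (NV-{v})) u \<longrightarrow> hybrid A u"
  proof (intro ballI impI)
    fix u assume u: "u \<in> NV - {v}" "hybrid (A \<inter> (NV-{v}) \<times> (NV-{v})) u"
    have eq: "{x. (x,u) \<in> A \<inter> (NV-{v}) \<times> (NV-{v})} = {x. (x,u) \<in> A} - {v}" using del_pred[OF PA u(1)] .
    have "card ({x. (x,u) \<in> A} - {v}) = 2" using u(2) eq unfolding hybrid_def indeg_def by simp
    moreover have "card ({x. (x,u) \<in> A} - {v}) \<le> card {x. (x,u) \<in> A}"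
      using prenet_fin[OF P] by (intro card_mono) auto
    moreover have "card {x. (x,u) \<in> A} \<le> 2" using prenet_indeg_le2[OF P] u(1) unfolding indeg_def by simp
    ultimately show "hybrid A u" unfolding hybrid_def indeg_def by simp
  qed
qed



lemma prenetD:
  assumes "prenet NV A X r"
  shows "finite NV" "A \<subseteq> NV \<times> NV" "acyclic A" "r \<in> NV" "indeg A r = 0" "\<forall>v\<in>NV. (r,v) \<in> A\<^sup>*"
    "X \<subseteq> NV" "\<forall>v\<in>NV. v \<in> X \<longleftrightarrow> outdeg A v = 0" "\<forall>v\<in>X. indeg A v = 1"
    "\<forall>v\<in>NV. v \<noteq> r \<longrightarrow> indeg A v = 1 \<or> indeg A v = 2" "lvl NV A"
  using assms unfolding prenet_def by simp_all

lemma prenetI: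
  assumes "finite NV" "A \<subseteq> NV \<times> NV" "acyclic A" "r \<in> NV" "indeg A r = 0" "\<forall>v\<in>NV. (r,v) \<in> A\<^sup>*"
    "X \<subseteq> NV" "\<forall>v\<in>NV. v \<in> X \<longleftrightarrow> outdeg A v = 0" "\<forall>v\<in>X. indeg A v = 1"
    "\<forall>v\<in>NV. v \<noteq> r \<longrightarrow> indeg A v = 1 \<or> indeg A v = 2" "lvl NV A"
  shows "prenet NV A X r"
  using assms unfolding prenet_def by simp

lemma anc_equiv:
  assumes A'sub: "A' \<subseteq> A\<^sup>*"
    and predv: "\<forall>x. (x,v) \<in> A \<longrightarrow> x = q" and succv: "\<forall>y. (v,y) \<in> A \<longrightarrow> y = c"
    and qc: "(q,c) \<in> A'\<^sup>*" and qv: "q \<noteq> v"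
    and other: "\<forall>a b. (a,b) \<in> A \<longrightarrow> a \<noteq> v \<longrightarrow> b \<noteq> v \<longrightarrow> (a,b) \<in> A'"
    and "u \<noteq> v" "w \<noteq> v"
  shows "(u,w) \<in> A\<^sup>* \<longleftrightarrow> (u,w) \<in> A'\<^sup>*"
proof
  assume "(u,w) \<in> A\<^sup>*"
  then show "(u,w) \<in> A'\<^sup>*" using reach_pres[OF _ assms(7) predv succv qc qv other] assms(8) by blast
next
  assume "(u,w) \<in> A'\<^sup>*"
  then show "(u,w) \<in> A\<^sup>*" using rtrancl_subset_rtrancl[OF A'sub] by blast
qed

lemma rem_cond:
  assumes succ: "{w. (v,w) \<in> A} = {c}" and vX: "v \<notin> X" and cN: "c \<in> NV'" "c \<in> NV" and NV': "NV - NV' \<subseteq> {v}"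
  shows "\<forall>w\<in>NV-NV'. \<forall>x\<in>X. \<forall>y\<in>X. common_ancestor NV A x y w \<longrightarrow>
              (\<exists>w'\<in>NV'. (w,w') \<in> A\<^sup>* \<and> common_ancestor NV A x y w')"
proof (intro ballI impI)
  fix w x y assume w: "w \<in> NV - NV'" and xy: "x \<in> X" "y \<in> X" and ca: "common_ancestor NV A x y w"
  have wv: "w = v" using w NV' by auto
  have "(v,x) \<in> A\<^sup>*" "(v,y) \<in> A\<^sup>*" using ca wv unfolding common_ancestor_def ancestor_def by auto
  moreover have "x \<noteq> v" "y \<noteq> v" using xy vX by auto
  ultimately have "(c,x) \<in> A\<^sup>*" "(c,y) \<in> A\<^sup>*" using succ_step[OF succ] by auto
  then have "common_ancestor NV A x y c" using cN unfolding common_ancestor_def ancestor_def by simp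
  moreover have "(w,c) \<in> A\<^sup>*" using wv succ by blast
  ultimately show "\<exists>w'\<in>NV'. (w,w') \<in> A\<^sup>* \<and> common_ancestor NV A x y w'" using cN by blast
qed

lemma card_empty_fin: "finite S \<Longrightarrow> card S = 0 \<Longrightarrow> S = {}"
  by simp

lemma reduce_root:
  assumes P: "prenet NV A X r" and cX: "2 \<le> card X" and s: "{w. (r,w) \<in> A} = {c}"
  shows "prenet (NV - {r}) (A \<inter> (NV - {r}) \<times> (NV - {r})) X c \<and>
         same_lca NV A (NV - {r}) (A \<inter> (NV - {r}) \<times> (NV - {r})) X \<and> card (NV - {r}) < card NV"
proof -
  let ?N = "NV - {r}" and ?A = "A \<inter> (NV - {r}) \<times> (NV - {r})"
  note D = prenetD[OF P]
  have rc: "(r,c) \<in> A" using s by blast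
  have cN: "c \<in> NV" using rc D(2) by blast
  have cr: "c \<noteq> r" using acyc_no_back[OF D(3) rc] by auto
  have predr: "{u. (u,r) \<in> A} = {}" using D(5) prenet_fin[OF P] unfolding indeg_def by simp
  have predc: "{u. (u,c) \<in> A} = {r}"
  proof
    show "{r} \<subseteq> {u. (u,c) \<in> A}" using rc by simp
    show "{u. (u,c) \<in> A} \<subseteq> {r}"
    proof
      fix p assume "p \<in> {u. (u,c) \<in> A}"
      then have pc: "(p,c) \<in> A" by simp
      then have pN: "p \<in> NV" using D(2) by blast
      show "p \<in> {r}"
      proof (rule ccontr)
        assume "p \<notin> {r}"
        then have "(c,p) \<in> A\<^sup>*" using succ_step[OF s] D(6) pN by auto
        then show False using acyc_no_back[OF D(3) pc] by simp
      qed
    qed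
  qed
  have rX: "r \<notin> X" using D(9) D(5) by auto
  have cX': "c \<notin> X"
  proof
    assume "c \<in> X"
    then have "outdeg A c = 0" using D(8) cN by simp
    then have sc: "{w. (c,w) \<in> A} = {}" using prenet_fin[OF P] unfolding outdeg_def by simp
    have "NV \<subseteq> {r,c}"
    proof
      fix u assume uN: "u \<in> NV"
      show "u \<in> {r,c}"
      proof (rule ccontr)
        assume "u \<notin> {r,c}"
        then have "(c,u) \<in> A\<^sup>*" using succ_step[OF s] D(6) uN by auto
        then have "(c,u) \<in> A\<^sup>+" using \<open>u \<notin> {r,c}\<close> rtrancl_eq_or_trancl[of c u A] by auto
        then obtain w where "(c,w) \<in> A" by (meson tranclD)
        then show False using sc by blast
      qed
    qed
    then have "X \<subseteq> {c}" using D(7) rX by auto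
    then have "card X \<le> card {c}" by (intro card_mono) simp_all
    then show False using cX by simp
  qed
  have predeq: "\<And>u. u \<in> ?N \<Longrightarrow> u \<noteq> c \<Longrightarrow> {x. (x,u) \<in> ?A} = {x. (x,u) \<in> A}"
  proof -
    fix u assume u: "u \<in> ?N" "u \<noteq> c"
    have "r \<notin> {x. (x,u) \<in> A}" using s u(2) by blast
    then show "{x. (x,u) \<in> ?A} = {x. (x,u) \<in> A}" using del_pred[OF D(2) u(1)] by simp
  qed
  have succeq: "\<And>u. u \<in> ?N \<Longrightarrow> {x. (u,x) \<in> ?A} = {x. (u,x) \<in> A}"
  proof -
    fix u assume u: "u \<in> ?N"
    have "r \<notin> {x. (u,x) \<in> A}" using predr by blast
    then show "{x. (u,x) \<in> ?A} = {x. (u,x) \<in> A}" using del_succ[OF D(2) u(1)] by simp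
  qed
  have other: "\<forall>a b. (a,b) \<in> A \<longrightarrow> a \<noteq> r \<longrightarrow> b \<noteq> r \<longrightarrow> (a,b) \<in> ?A" using D(2) by blast
  have predv: "\<forall>x. (x,r) \<in> A \<longrightarrow> x = c" using predr by blast
  have succv: "\<forall>y. (r,y) \<in> A \<longrightarrow> y = c" using s by blast
  have anc: "\<And>u w. u \<noteq> r \<Longrightarrow> w \<noteq> r \<Longrightarrow> (u,w) \<in> A\<^sup>* \<longleftrightarrow> (u,w) \<in> ?A\<^sup>*"
    by (rule anc_equiv[OF _ predv succv _ cr other]) auto
  have p1: "finite ?N" using D(1) by simp
  have p2: "?A \<subseteq> ?N \<times> ?N" by auto
  have p3: "acyclic ?A" using D(3) by (rule acyclic_subset) auto
  have p4: "c \<in> ?N" using cN cr by simp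
  have p5: "indeg ?A c = 0" using del_pred[OF D(2) p4] predc unfolding indeg_def by simp
  have p6: "\<forall>v\<in>?N. (c,v) \<in> ?A\<^sup>*"
  proof
    fix v assume v: "v \<in> ?N"
    then have "(c,v) \<in> A\<^sup>*" using succ_step[OF s] D(6) by auto
    then show "(c,v) \<in> ?A\<^sup>*" using anc[of c v] cr v by simp
  qed
  have p7: "X \<subseteq> ?N" using D(7) rX by auto
  have p8: "\<forall>v\<in>?N. v \<in> X \<longleftrightarrow> outdeg ?A v = 0"
    using succeq D(8) unfolding outdeg_def by simp
  have p9: "\<forall>v\<in>X. indeg ?A v = 1"
  proof
    fix v assume v: "v \<in> X"
    then have "v \<in> ?N" "v \<noteq> c" using p7 cX' by auto
    then show "indeg ?A v = 1" using predeq D(9) v unfolding indeg_def by simp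
  qed
  have p10: "\<forall>v\<in>?N. v \<noteq> c \<longrightarrow> indeg ?A v = 1 \<or> indeg ?A v = 2"
  proof (intro ballI impI)
    fix v assume v: "v \<in> ?N" "v \<noteq> c"
    then show "indeg ?A v = 1 \<or> indeg ?A v = 2" using predeq D(10) unfolding indeg_def by simp
  qed
  have p11: "lvl ?N ?A" by (rule lvl_del[OF P])
  have pre: "prenet ?N ?A X c" by (rule prenetI[OF p1 p2 p3 p4 p5 p6 p7 p8 p9 p10 p11])
  have sl: "same_lca NV A ?N ?A X"
  proof (rule same_lca_remove[OF D(3) _ p7])
    show "?N \<subseteq> NV" by auto
    show "\<forall>u\<in>?N. \<forall>w\<in>?N. (u,w) \<in> A\<^sup>* \<longleftrightarrow> (u,w) \<in> ?A\<^sup>*" using anc by simp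
    show "\<forall>w\<in>NV-?N. \<forall>x\<in>X. \<forall>y\<in>X. common_ancestor NV A x y w \<longrightarrow>
              (\<exists>w'\<in>?N. (w,w') \<in> A\<^sup>* \<and> common_ancestor NV A x y w')"
      by (rule rem_cond[OF s rX p4 cN]) auto
  qed
  have "card ?N < card NV" by (rule card_Diff1_less[OF D(1) D(4)])
  then show ?thesis using pre sl by simp
qed



lemma basic_v:
  assumes P: "prenet NV A X r" and pv: "{u. (u,v) \<in> A} = {q}" and sv: "{w. (v,w) \<in> A} = {c}"
  shows "(q,v) \<in> A" "(v,c) \<in> A" "q \<in> NV" "c \<in> NV" "v \<in> NV" "q \<noteq> v" "c \<noteq> v" "q \<noteq> c" "v \<notin> X"
    "\<forall>x. (x,v) \<in> A \<longrightarrow> x = q" "\<forall>y. (v,y) \<in> A \<longrightarrow> y = c"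
proof -
  note D = prenetD[OF P]
  show qv: "(q,v) \<in> A" using pv by blast
  show vc: "(v,c) \<in> A" using sv by blast
  show "q \<in> NV" "v \<in> NV" "c \<in> NV" using qv vc D(2) by auto
  show "q \<noteq> v" using acyc_no_back[OF D(3) qv] by auto
  show "c \<noteq> v" using acyc_no_back[OF D(3) vc] by auto
  show "q \<noteq> c" using acyc_no_back[OF D(3) vc] qv by auto
  have "outdeg A v = 1" using sv unfolding outdeg_def by simp
  then show "v \<notin> X" using D(8) \<open>v \<in> NV\<close> by auto
  show "\<forall>x. (x,v) \<in> A \<longrightarrow> x = q" using pv by blast
  show "\<forall>y. (v,y) \<in> A \<longrightarrow> y = c" using sv by blast
qed

lemma reduce_del:
  assumes P: "prenet NV A X r" and vr: "v \<noteq> r"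
    and pv: "{u. (u,v) \<in> A} = {q}" and sv: "{w. (v,w) \<in> A} = {c}" and qc: "(q,c) \<in> A"
  shows "prenet (NV - {v}) (A \<inter> (NV - {v}) \<times> (NV - {v})) X r \<and>
         same_lca NV A (NV - {v}) (A \<inter> (NV - {v}) \<times> (NV - {v})) X \<and> card (NV - {v}) < card NV"
proof -
  let ?N = "NV - {v}" and ?A = "A \<inter> (NV - {v}) \<times> (NV - {v})"
  note D = prenetD[OF P]
  note B = basic_v[OF P pv sv]
  have predc: "{u. (u,c) \<in> A} = {q,v}"
  proof -
    have sub: "{q,v} \<subseteq> {u. (u,c) \<in> A}" using qc B(2) by simp
    have "card {q,v} = 2" using B(6) by simp
    moreover have "card {u. (u,c) \<in> A} \<le> 2" using prenet_indeg_le2[OF P B(4)] unfolding indeg_def .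
    moreover have fin: "finite {u. (u,c) \<in> A}" using prenet_fin[OF P] by simp
    moreover have "card {q,v} \<le> card {u. (u,c) \<in> A}" using fin sub by (rule card_mono)
    ultimately have "card {q,v} = card {u. (u,c) \<in> A}" by linarith
    then show ?thesis using card_subset_eq[OF fin sub] by simp
  qed
  have cX: "c \<notin> X"
  proof
    assume "c \<in> X"
    then have "indeg A c = 1" using D(9) by simp
    moreover have "indeg A c = 2" using predc B(6) unfolding indeg_def by simp
    ultimately show False by simp
  qed
  have cr: "c \<noteq> r"
  proof
    assume "c = r"
    then have "{x. (x,r) \<in> A} = {q,v}" using predc by simp
    then show False using D(5) unfolding indeg_def by simp
  qed
  have rN: "r \<in> ?N" using D(4) vr by simp
  have predeq: "\<And>u. u \<in> ?N \<Longrightarrow> u \<noteq> c \<Longrightarrow> {x. (x,u) \<in> ?A} = {x. (x,u) \<in> A}"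
  proof -
    fix u assume u: "u \<in> ?N" "u \<noteq> c"
    have "v \<notin> {x. (x,u) \<in> A}" using B(11) u(2) by blast
    then show "{x. (x,u) \<in> ?A} = {x. (x,u) \<in> A}" using del_pred[OF D(2) u(1)] by simp
  qed
  have succeq: "\<And>u. u \<in> ?N \<Longrightarrow> u \<noteq> q \<Longrightarrow> {x. (u,x) \<in> ?A} = {x. (u,x) \<in> A}"
  proof -
    fix u assume u: "u \<in> ?N" "u \<noteq> q"
    have "v \<notin> {x. (u,x) \<in> A}" using B(10) u(2) by blast
    then show "{x. (u,x) \<in> ?A} = {x. (u,x) \<in> A}" using del_succ[OF D(2) u(1)] by simp
  qed
  have qN: "q \<in> ?N" and cN: "c \<in> ?N" using B(3,4,6,7) by simp_all
  have cq': "c \<in> {x. (q,x) \<in> ?A}" using qc qN cN by simp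
  have other: "\<forall>a b. (a,b) \<in> A \<longrightarrow> a \<noteq> v \<longrightarrow> b \<noteq> v \<longrightarrow> (a,b) \<in> ?A" using D(2) by blast
  have qcA: "(q,c) \<in> ?A\<^sup>*" using cq' by auto
  have anc: "\<And>u w. u \<noteq> v \<Longrightarrow> w \<noteq> v \<Longrightarrow> (u,w) \<in> A\<^sup>* \<longleftrightarrow> (u,w) \<in> ?A\<^sup>*"
    by (rule anc_equiv[OF _ B(10) B(11) qcA B(6) other]) auto
  have p1: "finite ?N" using D(1) by simp
  have p2: "?A \<subseteq> ?N \<times> ?N" by auto
  have p3: "acyclic ?A" using D(3) by (rule acyclic_subset) auto
  have p5: "indeg ?A r = 0"
  proof -
    have "{x. (x,r) \<in> A} = {}" using D(5) prenet_fin[OF P] unfolding indeg_def by simp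
    then show ?thesis using del_pred[OF D(2) rN] unfolding indeg_def by simp
  qed
  have p6: "\<forall>u\<in>?N. (r,u) \<in> ?A\<^sup>*"
  proof
    fix u assume u: "u \<in> ?N"
    then have "(r,u) \<in> A\<^sup>*" using D(6) by simp
    then show "(r,u) \<in> ?A\<^sup>*" using anc[of r u] vr u by simp
  qed
  have p7: "X \<subseteq> ?N" using D(7) B(9) by auto
  have p8: "\<forall>u\<in>?N. u \<in> X \<longleftrightarrow> outdeg ?A u = 0"
  proof
    fix u assume u: "u \<in> ?N"
    show "u \<in> X \<longleftrightarrow> outdeg ?A u = 0"
    proof (cases "u = q")
      case False
      then show ?thesis using succeq[OF u] D(8) u unfolding outdeg_def by simp
    next
      case True
      have f: "finite {x. (q,x) \<in> ?A}" using p1 p2 by (rule fin_succ)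
      have "outdeg ?A q \<noteq> 0" using cq' f unfolding outdeg_def by auto
      moreover have "outdeg A q \<noteq> 0" using qc prenet_fin[OF P] unfolding outdeg_def by auto
      ultimately show ?thesis using True D(8) B(3) by simp
    qed
  qed
  have p9: "\<forall>x\<in>X. indeg ?A x = 1"
  proof
    fix x assume x: "x \<in> X"
    then have "x \<in> ?N" "x \<noteq> c" using p7 cX by auto
    then show "indeg ?A x = 1" using predeq D(9) x unfolding indeg_def by simp
  qed
  have p10: "\<forall>u\<in>?N. u \<noteq> r \<longrightarrow> indeg ?A u = 1 \<or> indeg ?A u = 2"
  proof (intro ballI impI)
    fix u assume u: "u \<in> ?N" "u \<noteq> r"
    show "indeg ?A u = 1 \<or> indeg ?A u = 2"
    proof (cases "u = c")
      case True
      then have "{x. (x,u) \<in> ?A} = {q}" using del_pred[OF D(2) cN] predc B(6) by auto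
      then show ?thesis unfolding indeg_def by simp
    next
      case False
      then show ?thesis using predeq u D(10) unfolding indeg_def by simp
    qed
  qed
  have p11: "lvl ?N ?A" by (rule lvl_del[OF P])
  have pre: "prenet ?N ?A X r" by (rule prenetI[OF p1 p2 p3 rN p5 p6 p7 p8 p9 p10 p11])
  have sl: "same_lca NV A ?N ?A X"
  proof (rule same_lca_remove[OF D(3) _ p7])
    show "?N \<subseteq> NV" by auto
    show "\<forall>u\<in>?N. \<forall>w\<in>?N. (u,w) \<in> A\<^sup>* \<longleftrightarrow> (u,w) \<in> ?A\<^sup>*" using anc by simp
    show "\<forall>w\<in>NV-?N. \<forall>x\<in>X. \<forall>y\<in>X. common_ancestor NV A x y w \<longrightarrow>
              (\<exists>w'\<in>?N. (w,w') \<in> A\<^sup>* \<and> common_ancestor NV A x y w')"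
      by (rule rem_cond[OF sv B(9) cN B(4)]) auto
  qed
  have "card ?N < card NV" by (rule card_Diff1_less[OF D(1) B(5)])
  then show ?thesis using pre sl by simp
qed



lemma reduce_contr:
  assumes P: "prenet NV A X r" and vr: "v \<noteq> r"
    and pv: "{u. (u,v) \<in> A} = {q}" and sv: "{w. (v,w) \<in> A} = {c}" and nqc: "(q,c) \<notin> A"
  shows "prenet (NV - {v}) (A \<inter> (NV - {v}) \<times> (NV - {v}) \<union> {(q,c)}) X r \<and>
         same_lca NV A (NV - {v}) (A \<inter> (NV - {v}) \<times> (NV - {v}) \<union> {(q,c)}) X \<and> card (NV - {v}) < card NV"
proof -
  let ?N = "NV - {v}" and ?A = "A \<inter> (NV - {v}) \<times> (NV - {v}) \<union> {(q,c)}"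
  let ?D = "A \<inter> (NV - {v}) \<times> (NV - {v})"
  note D = prenetD[OF P]
  note B = basic_v[OF P pv sv]
  have qN: "q \<in> ?N" and cN: "c \<in> ?N" using B(3,4,6,7) by simp_all
  have rN: "r \<in> ?N" using D(4) vr by simp
  have indeq: "indeg ?A u = indeg A u" if u: "u \<in> ?N" for u
  proof (cases "u = c")
    case True
    have e1: "{x. (x,c) \<in> ?A} = insert q {x. (x,c) \<in> ?D}" by auto
    have e2: "{x. (x,c) \<in> ?D} = {x. (x,c) \<in> A} - {v}" by (rule del_pred[OF D(2) cN])
    have fin: "finite {x. (x,c) \<in> A}" using prenet_fin[OF P] by simp
    have vin: "v \<in> {x. (x,c) \<in> A}" using B(2) by simp
    have qnot: "q \<notin> {x. (x,c) \<in> A} - {v}" using nqc by simp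
    have "card (insert q ({x. (x,c) \<in> A} - {v})) = Suc (card ({x. (x,c) \<in> A} - {v}))"
      using fin qnot by (intro card_insert_disjoint) simp_all
    also have "\<dots> = card {x. (x,c) \<in> A}" using card_Suc_Diff1[OF fin vin] .
    finally show ?thesis using True e1 e2 unfolding indeg_def by simp
  next
    case False
    have e1: "{x. (x,u) \<in> ?A} = {x. (x,u) \<in> ?D}" using False by auto
    have e2: "{x. (x,u) \<in> ?D} = {x. (x,u) \<in> A} - {v}" by (rule del_pred[OF D(2) u])
    have "v \<notin> {x. (x,u) \<in> A}" using B(11) False by blast
    then show ?thesis using e1 e2 unfolding indeg_def by simp
  qed
  have outeq: "outdeg ?A u = outdeg A u" if u: "u \<in> ?N" for u
  proof (cases "u = q")
    case True
    have e1: "{x. (q,x) \<in> ?A} = insert c {x. (q,x) \<in> ?D}" by auto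
    have e2: "{x. (q,x) \<in> ?D} = {x. (q,x) \<in> A} - {v}" by (rule del_succ[OF D(2) qN])
    have fin: "finite {x. (q,x) \<in> A}" using prenet_fin[OF P] by simp
    have vin: "v \<in> {x. (q,x) \<in> A}" using B(1) by simp
    have cnot: "c \<notin> {x. (q,x) \<in> A} - {v}" using nqc by simp
    have "card (insert c ({x. (q,x) \<in> A} - {v})) = Suc (card ({x. (q,x) \<in> A} - {v}))"
      using fin cnot by (intro card_insert_disjoint) simp_all
    also have "\<dots> = card {x. (q,x) \<in> A}" using card_Suc_Diff1[OF fin vin] .
    finally show ?thesis using True e1 e2 unfolding outdeg_def by simp
  next
    case False
    have e1: "{x. (u,x) \<in> ?A} = {x. (u,x) \<in> ?D}" using False by auto
    have e2: "{x. (u,x) \<in> ?D} = {x. (u,x) \<in> A} - {v}" by (rule del_succ[OF D(2) u])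
    have "v \<notin> {x. (u,x) \<in> A}" using B(10) False by blast
    then show ?thesis using e1 e2 unfolding outdeg_def by simp
  qed
  have sub: "?A \<subseteq> A\<^sup>+"
  proof
    fix e assume "e \<in> ?A"
    then consider "e \<in> A" | "e = (q,c)" by blast
    then show "e \<in> A\<^sup>+"
    proof cases
      case 1 then show ?thesis by (rule r_into_trancl')
    next
      case 2
      have "(q,c) \<in> A\<^sup>+" using B(1,2) by (meson trancl.r_into_trancl trancl_into_trancl)
      then show ?thesis using 2 by simp
    qed
  qed
  have subr: "?A \<subseteq> A\<^sup>*"
  proof (rule subsetI)
    fix e assume e: "e \<in> ?A"
    obtain a b where ab: "e = (a,b)" by (cases e)
    then have "(a,b) \<in> A\<^sup>+" using e sub by blast
    then show "e \<in> A\<^sup>*" using ab by (simp add: trancl_into_rtrancl)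
  qed
  have other: "\<forall>a b. (a,b) \<in> A \<longrightarrow> a \<noteq> v \<longrightarrow> b \<noteq> v \<longrightarrow> (a,b) \<in> ?A" using D(2) by blast
  have qcA: "(q,c) \<in> ?A\<^sup>*" by (rule r_into_rtrancl) simp
  have anc: "\<And>u w. u \<noteq> v \<Longrightarrow> w \<noteq> v \<Longrightarrow> (u,w) \<in> A\<^sup>* \<longleftrightarrow> (u,w) \<in> ?A\<^sup>*"
    by (rule anc_equiv[OF subr B(10) B(11) qcA B(6) other])
  have p1: "finite ?N" using D(1) by simp
  have p2: "?A \<subseteq> ?N \<times> ?N" using qN cN by auto
  have p3: "acyclic ?A" unfolding acyclic_def
  proof
    fix x
    show "(x,x) \<notin> ?A\<^sup>+"
    proof
      assume "(x,x) \<in> ?A\<^sup>+"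
      then have "(x,x) \<in> (A\<^sup>+)\<^sup>+" using sub by (rule trancl_mono)
      then have "(x,x) \<in> A\<^sup>+" by simp
      then show False using D(3) unfolding acyclic_def by blast
    qed
  qed
  have p5: "indeg ?A r = 0" using indeq[OF rN] D(5) by simp
  have p6: "\<forall>u\<in>?N. (r,u) \<in> ?A\<^sup>*"
  proof
    fix u assume u: "u \<in> ?N"
    then have "(r,u) \<in> A\<^sup>*" using D(6) by simp
    then show "(r,u) \<in> ?A\<^sup>*" using anc[of r u] vr u by simp
  qed
  have p7: "X \<subseteq> ?N" using D(7) B(9) by auto
  have p8: "\<forall>u\<in>?N. u \<in> X \<longleftrightarrow> outdeg ?A u = 0" using outeq D(8) by simp
  have p9: "\<forall>x\<in>X. indeg ?A x = 1"
  proof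
    fix x assume x: "x \<in> X"
    then have "x \<in> ?N" using p7 by blast
    then show "indeg ?A x = 1" using indeq D(9) x by simp
  qed
  have p10: "\<forall>u\<in>?N. u \<noteq> r \<longrightarrow> indeg ?A u = 1 \<or> indeg ?A u = 2" using indeq D(10) by simp
  have hyb: "\<forall>x\<in>NV-{v}. hybrid ?A x \<longleftrightarrow> hybrid A x" using indeq unfolding hybrid_def by simp
  have nh: "\<not> (hybrid A q \<and> hybrid A c)" by (rule not_two_hybrids[OF D(11) D(2) D(3) D(4) D(6) pv sv])
  have p11: "lvl ?N ?A"
    by (rule lvl_contract[OF D(11) D(2) B(5) B(3) B(4) B(6) B(7) B(8) B(1) B(2) hyb nh refl])
  have pre: "prenet ?N ?A X r" by (rule prenetI[OF p1 p2 p3 rN p5 p6 p7 p8 p9 p10 p11])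
  have sl: "same_lca NV A ?N ?A X"
  proof (rule same_lca_remove[OF D(3) _ p7])
    show "?N \<subseteq> NV" by auto
    show "\<forall>u\<in>?N. \<forall>w\<in>?N. (u,w) \<in> A\<^sup>* \<longleftrightarrow> (u,w) \<in> ?A\<^sup>*" using anc by simp
    show "\<forall>w\<in>NV-?N. \<forall>x\<in>X. \<forall>y\<in>X. common_ancestor NV A x y w \<longrightarrow>
              (\<exists>w'\<in>?N. (w,w') \<in> A\<^sup>* \<and> common_ancestor NV A x y w')"
      by (rule rem_cond[OF sv B(9) cN B(4)]) auto
  qed
  have "card ?N < card NV" by (rule card_Diff1_less[OF D(1) B(5)])
  then show ?thesis using pre sl by simp
qed

lemma prenet_network:
  assumes P: "prenet NV A X r" and nb: "\<not> (\<exists>v\<in>NV. outdeg A v = 1 \<and> (v = r \<or> indeg A v = 1))"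
  shows "network NV A X \<and> level1 NV A"
proof -
  note D = prenetD[OF P]
  have dag: "is_dag NV A" unfolding is_dag_def using D(1-3) by simp
  have rX: "r \<notin> X" using D(9) D(5) by auto
  have uniq: "\<exists>!r'. r' \<in> NV \<and> indeg A r' = 0"
  proof (rule ex1I[of _ r])
    show "r \<in> NV \<and> indeg A r = 0" using D(4,5) by simp
    fix r' assume "r' \<in> NV \<and> indeg A r' = 0"
    then show "r' = r" using D(10) by force
  qed
  have root: "\<forall>r'\<in>NV. indeg A r' = 0 \<longrightarrow> outdeg A r' \<ge> 2"
  proof (intro ballI impI)
    fix r' assume r': "r' \<in> NV" "indeg A r' = 0"
    then have rr: "r' = r" using D(10) by force
    have "outdeg A r \<noteq> 0" using D(8) D(4) rX by simp
    moreover have "outdeg A r \<noteq> 1" using nb D(4) by blast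
    ultimately show "outdeg A r' \<ge> 2" using rr by simp
  qed
  have leaves: "\<forall>v\<in>NV. v \<in> X \<longleftrightarrow> outdeg A v = 0 \<and> indeg A v = 1" using D(8,9) by blast
  have inner: "\<forall>v\<in>NV. indeg A v \<noteq> 0 \<and> v \<notin> X \<longrightarrow>
           (indeg A v = 1 \<and> outdeg A v \<ge> 2) \<or> (indeg A v = 2 \<and> outdeg A v \<ge> 1)"
  proof (intro ballI impI)
    fix v assume v: "v \<in> NV" "indeg A v \<noteq> 0 \<and> v \<notin> X"
    then have vr: "v \<noteq> r" using D(5) by auto
    have o: "outdeg A v \<noteq> 0" using D(8) v by simp
    have i: "indeg A v = 1 \<or> indeg A v = 2" using D(10) v vr by simp
    have "indeg A v = 1 \<longrightarrow> outdeg A v \<noteq> 1" using nb v(1) by blast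
    then show "(indeg A v = 1 \<and> outdeg A v \<ge> 2) \<or> (indeg A v = 2 \<and> outdeg A v \<ge> 1)"
      using o i by auto
  qed
  have "network NV A X" unfolding network_def
    using dag D(7) uniq root leaves inner by (intro conjI disjI2) simp_all
  then show ?thesis using lvl_level1[OF D(11)] by simp
qed

lemma cleanup:
  "prenet NV A X r \<Longrightarrow> 2 \<le> card X \<Longrightarrow>
   \<exists>NV' A'. NV' \<subseteq> NV \<and> network NV' A' X \<and> level1 NV' A' \<and> same_lca NV A NV' A' X"
proof (induction "card NV" arbitrary: NV A r rule: less_induct)
  case less
  show ?case
  proof (cases "\<exists>v\<in>NV. outdeg A v = 1 \<and> (v = r \<or> indeg A v = 1)")
    case True
    then obtain v where v: "v \<in> NV" "outdeg A v = 1" "v = r \<or> indeg A v = 1" by blast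
    obtain c where sv: "{w. (v,w) \<in> A} = {c}" using v(2) unfolding outdeg_def by (meson card_1_singletonE)
    have step: "\<exists>NV' A'. NV' \<subseteq> NV \<and> network NV' A' X \<and> level1 NV' A' \<and> same_lca NV A NV' A' X"
      if R: "prenet N1 A1 X r1 \<and> same_lca NV A N1 A1 X \<and> card N1 < card NV" and N1: "N1 \<subseteq> NV"
      for N1 A1 r1
    proof -
      obtain N2 A2 where N2: "N2 \<subseteq> N1" "network N2 A2 X" "level1 N2 A2" "same_lca N1 A1 N2 A2 X"
        using less.hyps[of N1 A1 r1] R less.prems(2) by blast
      have "same_lca NV A N2 A2 X" using R N2(4) by (rule same_lca_trans[OF conjunct1[OF conjunct2]])
      then show ?thesis using N2 N1 by blast
    qed
    consider (root) "v = r" | (inner) "v \<noteq> r" "indeg A v = 1" using v(3) by blast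
    then show ?thesis
    proof cases
      case root
      have "{w. (r,w) \<in> A} = {c}" using sv root by simp
      then show ?thesis using reduce_root[OF less.prems(1) less.prems(2)] step by blast
    next
      case inner
      obtain q where pv: "{u. (u,v) \<in> A} = {q}" using inner(2) unfolding indeg_def by (meson card_1_singletonE)
      show ?thesis
      proof (cases "(q,c) \<in> A")
        case True
        then show ?thesis using reduce_del[OF less.prems(1) inner(1) pv sv] step by blast
      next
        case False
        then show ?thesis using reduce_contr[OF less.prems(1) inner(1) pv sv] step by blast
      qed
    qed
  next
    case False
    then have "network NV A X \<and> level1 NV A" by (rule prenet_network[OF less.prems(1)])
    then show ?thesis using same_lca_refl by blast
  qed
qed



lemma network_reach:
  assumes dag: "finite NV" "A \<subseteq> NV \<times> NV" "acyclic A"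
    and uniq: "\<And>u. u \<in> NV \<Longrightarrow> indeg A u = 0 \<Longrightarrow> u = r"
  shows "\<forall>v\<in>NV. (r,v) \<in> A\<^sup>*"
proof -
  have finA: "finite A" using dag(1,2) by (meson finite_SigmaI finite_subset)
  have wf: "wf A" by (rule finite_acyclic_wf[OF finA dag(3)])
  have "v \<in> NV \<longrightarrow> (r,v) \<in> A\<^sup>*" for v
  proof (induction v rule: wf_induct[OF wf])
    case (1 v)
    show ?case
    proof
      assume vN: "v \<in> NV"
      show "(r,v) \<in> A\<^sup>*"
      proof (cases "indeg A v = 0")
        case True
        then show ?thesis using uniq vN by simp
      next
        case False
        then have "{u. (u,v) \<in> A} \<noteq> {}" unfolding indeg_def by (metis card.empty)
        then obtain u where uv: "(u,v) \<in> A" by blast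
        then have "u \<in> NV" using dag(2) by blast
        then have "(r,u) \<in> A\<^sup>*" using 1 uv by blast
        then show ?thesis using uv by (rule rtrancl_into_rtrancl)
      qed
    qed
  qed
  then show ?thesis by blast
qed

lemma restrict:
  assumes N: "network NV A X" and L: "level1 NV A" and Y: "Y \<subseteq> X" "2 \<le> card Y"
  shows "\<exists>r. prenet {u\<in>NV. \<exists>y\<in>Y. (u,y) \<in> A\<^sup>*} (A \<inter> {u\<in>NV. \<exists>y\<in>Y. (u,y) \<in> A\<^sup>*} \<times> {u\<in>NV. \<exists>y\<in>Y. (u,y) \<in> A\<^sup>*}) Y r \<and>
     same_lca NV A {u\<in>NV. \<exists>y\<in>Y. (u,y) \<in> A\<^sup>*} (A \<inter> {u\<in>NV. \<exists>y\<in>Y. (u,y) \<in> A\<^sup>*} \<times> {u\<in>NV. \<exists>y\<in>Y. (u,y) \<in> A\<^sup>*}) Y \<and>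
     {u\<in>NV. \<exists>y\<in>Y. (u,y) \<in> A\<^sup>*} \<inter> X \<subseteq> Y"
proof -
  define S where "S = {u\<in>NV. \<exists>y\<in>Y. (u,y) \<in> A\<^sup>*}"
  define AS where "AS = A \<inter> S \<times> S"
  have dag: "finite NV" "A \<subseteq> NV \<times> NV" "acyclic A" and XN: "X \<subseteq> NV"
    using N unfolding network_def is_dag_def by simp_all
  have nontriv: "\<not> (\<exists>x. NV = {x} \<and> X = {x})"
  proof
    assume "\<exists>x. NV = {x} \<and> X = {x}"
    then obtain x where "X = {x}" by blast
    then have "card Y \<le> card {x}" using Y(1) by (intro card_mono) simp_all
    then show False using Y(2) by simp
  qed
  have disj: "(\<exists>x. NV = {x} \<and> X = {x}) \<or>
      ((\<exists>!r. r \<in> NV \<and> indeg A r = 0) \<and>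
       (\<forall>r\<in>NV. indeg A r = 0 \<longrightarrow> outdeg A r \<ge> 2) \<and>
       (\<forall>v\<in>NV. v \<in> X \<longleftrightarrow> outdeg A v = 0 \<and> indeg A v = 1) \<and>
       (\<forall>v\<in>NV. indeg A v \<noteq> 0 \<and> v \<notin> X \<longrightarrow>
           (indeg A v = 1 \<and> outdeg A v \<ge> 2) \<or> (indeg A v = 2 \<and> outdeg A v \<ge> 1)))"
    using N unfolding network_def by (rule conjunct2[OF conjunct2])
  have NN: "(\<exists>!r. r \<in> NV \<and> indeg A r = 0) \<and>
       (\<forall>r\<in>NV. indeg A r = 0 \<longrightarrow> outdeg A r \<ge> 2) \<and>
       (\<forall>v\<in>NV. v \<in> X \<longleftrightarrow> outdeg A v = 0 \<and> indeg A v = 1) \<and>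
       (\<forall>v\<in>NV. indeg A v \<noteq> 0 \<and> v \<notin> X \<longrightarrow>
           (indeg A v = 1 \<and> outdeg A v \<ge> 2) \<or> (indeg A v = 2 \<and> outdeg A v \<ge> 1))"
    using disj nontriv by (elim disjE) simp_all
  have ex1: "\<exists>!r. r \<in> NV \<and> indeg A r = 0" using NN by (rule conjunct1)
  obtain r where r0: "r \<in> NV \<and> indeg A r = 0" and u0: "\<forall>y. y \<in> NV \<and> indeg A y = 0 \<longrightarrow> y = r"
    using ex1 by (rule ex1E) 
  have r: "r \<in> NV" "indeg A r = 0" using r0 by simp_all
  have uniq: "\<And>u. u \<in> NV \<Longrightarrow> indeg A u = 0 \<Longrightarrow> u = r" using u0 by simp
  have leaf: "\<forall>v\<in>NV. v \<in> X \<longleftrightarrow> outdeg A v = 0 \<and> indeg A v = 1"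
    using NN by (rule conjunct1[OF conjunct2[OF conjunct2]])
  have inner: "\<forall>v\<in>NV. indeg A v \<noteq> 0 \<and> v \<notin> X \<longrightarrow>
           (indeg A v = 1 \<and> outdeg A v \<ge> 2) \<or> (indeg A v = 2 \<and> outdeg A v \<ge> 1)"
    using NN by (rule conjunct2[OF conjunct2[OF conjunct2]])
  have reach: "\<forall>v\<in>NV. (r,v) \<in> A\<^sup>*" by (rule network_reach[OF dag uniq])
  have SN: "S \<subseteq> NV" unfolding S_def by blast
  have closed: "\<And>a b. (a,b) \<in> A \<Longrightarrow> b \<in> S \<Longrightarrow> a \<in> S"
  proof -
    fix a b assume ab: "(a,b) \<in> A" "b \<in> S"
    obtain y where y: "y \<in> Y" "(b,y) \<in> A\<^sup>*" using ab(2) unfolding S_def by blast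
    have aN: "a \<in> NV" using ab dag(2) by blast
    have "(a,y) \<in> A\<^sup>*" using ab(1) y(2) by (rule converse_rtrancl_into_rtrancl)
    then show "a \<in> S" unfolding S_def using aN y(1) by blast
  qed
  have path: "\<And>u w. (u,w) \<in> A\<^sup>* \<Longrightarrow> w \<in> S \<Longrightarrow> (u,w) \<in> AS\<^sup>*"
  proof -
    fix u w assume uw: "(u,w) \<in> A\<^sup>*" "w \<in> S"
    from uw(1) show "(u,w) \<in> AS\<^sup>*"
    proof (induction rule: converse_rtrancl_induct)
      case base then show ?case by simp
    next
      case (step a b)
      have "b \<in> S"
      proof -
        have "(b,w) \<in> AS\<^sup>*" by (rule step(3))
        show ?thesis
        proof (cases "b = w")
          case True then show ?thesis using uw(2) by simp
        next
          case False
          then have "(b,w) \<in> AS\<^sup>+" using \<open>(b,w) \<in> AS\<^sup>*\<close> rtrancl_eq_or_trancl[of b w AS] by simp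
          then obtain z where "(b,z) \<in> AS" by (meson tranclD)
          then show ?thesis unfolding AS_def by blast
        qed
      qed
      then have "a \<in> S" using closed step(1) by blast
      then have "(a,b) \<in> AS" unfolding AS_def using step(1) \<open>b \<in> S\<close> by simp
      then show ?case using step(3) by (rule converse_rtrancl_into_rtrancl)
    qed
  qed
  have predS: "\<And>u. u \<in> S \<Longrightarrow> {x. (x,u) \<in> AS} = {x. (x,u) \<in> A}"
  proof -
    fix u assume uS: "u \<in> S"
    show "{x. (x,u) \<in> AS} = {x. (x,u) \<in> A}"
    proof (rule set_eqI)
      fix x
      show "x \<in> {x. (x,u) \<in> AS} \<longleftrightarrow> x \<in> {x. (x,u) \<in> A}"
      proof
        assume "x \<in> {x. (x,u) \<in> AS}" then show "x \<in> {x. (x,u) \<in> A}" unfolding AS_def by simp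
      next
        assume "x \<in> {x. (x,u) \<in> A}"
        then have xu: "(x,u) \<in> A" by simp
        then have "x \<in> S" using closed uS by blast
        then show "x \<in> {x. (x,u) \<in> AS}" unfolding AS_def using xu uS by simp
      qed
    qed
  qed
  have finS: "finite S" using dag(1) SN by (rule finite_subset[rotated])
  have ASsub: "AS \<subseteq> S \<times> S" unfolding AS_def by blast
  have finsucc: "\<And>v. finite {w. (v,w) \<in> A}" by (rule fin_succ[OF dag(1,2)])
  have finsuccS: "\<And>v. finite {w. (v,w) \<in> AS}" by (rule fin_succ[OF finS ASsub])
  obtain y0 where y0: "y0 \<in> Y" using Y(2) by fastforce
  have YN: "Y \<subseteq> NV" using Y(1) XN by blast
  have p1: "finite S" by (rule finS)
  have p3: "acyclic AS" using dag(3) unfolding AS_def by (rule acyclic_subset) blast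
  have p4: "r \<in> S" unfolding S_def using r(1) reach YN y0 by blast
  have p5: "indeg AS r = 0" using predS[OF p4] r(2) unfolding indeg_def by simp
  have p6: "\<forall>v\<in>S. (r,v) \<in> AS\<^sup>*" using reach SN path by blast
  have p7: "Y \<subseteq> S" unfolding S_def using YN by blast
  have p8: "\<forall>v\<in>S. v \<in> Y \<longleftrightarrow> outdeg AS v = 0"
  proof
    fix v assume vS: "v \<in> S"
    show "v \<in> Y \<longleftrightarrow> outdeg AS v = 0"
    proof
      assume "v \<in> Y"
      then have "outdeg A v = 0" using leaf Y(1) YN by blast
      then have "{w. (v,w) \<in> A} = {}" using finsucc unfolding outdeg_def by simp
      then have "{w. (v,w) \<in> AS} = {}" unfolding AS_def by blast
      then show "outdeg AS v = 0" unfolding outdeg_def by simp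
    next
      assume o: "outdeg AS v = 0"
      show "v \<in> Y"
      proof (rule ccontr)
        assume vY: "v \<notin> Y"
        obtain y where y: "y \<in> Y" "(v,y) \<in> A\<^sup>*" using vS unfolding S_def by blast
        then have "(v,y) \<in> A\<^sup>+" using vY rtrancl_eq_or_trancl[of v y A] by auto
        then obtain w where w: "(v,w) \<in> A" "(w,y) \<in> A\<^sup>*" by (meson tranclD)
        have "w \<in> NV" using w(1) dag(2) by blast
        then have "w \<in> S" unfolding S_def using w(2) y(1) by blast
        then have "w \<in> {w. (v,w) \<in> AS}" unfolding AS_def using w(1) vS by simp
        then show False using o finsuccS unfolding outdeg_def by (metis card_0_eq empty_iff)
      qed
    qed
  qed
  have p9: "\<forall>v\<in>Y. indeg AS v = 1"
  proof
    fix v assume vY: "v \<in> Y"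
    have vS: "v \<in> S" using vY p7 by blast
    have vN: "v \<in> NV" and vX: "v \<in> X" using vY YN Y(1) by blast+
    have "indeg A v = 1" using leaf vN vX by blast
    then show "indeg AS v = 1" using predS[OF vS] unfolding indeg_def by simp
  qed
  have p10: "\<forall>v\<in>S. v \<noteq> r \<longrightarrow> indeg AS v = 1 \<or> indeg AS v = 2"
  proof (intro ballI impI)
    fix v assume v: "v \<in> S" "v \<noteq> r"
    have vN: "v \<in> NV" using v SN by blast
    have i0: "indeg A v \<noteq> 0" using uniq vN v(2) by blast
    have "indeg A v = 1 \<or> indeg A v = 2"
    proof (cases "v \<in> X")
      case True then show ?thesis using leaf vN by blast
    next
      case False then show ?thesis using inner vN i0 by blast
    qed
    then show "indeg AS v = 1 \<or> indeg AS v = 2" using predS[OF v(1)] unfolding indeg_def by simp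
  qed
  have p11: "lvl S AS"
  proof (rule lvl_sub[OF level1_lvl[OF dag(1) L] SN])
    show "\<forall>x\<in>S. \<forall>y\<in>S. (x, y) \<in> undirected AS \<longleftrightarrow> (x, y) \<in> undirected A"
      unfolding undirected_def AS_def by blast
    show "\<forall>v\<in>S. hybrid AS v \<longrightarrow> hybrid A v" using predS unfolding hybrid_def indeg_def by simp
  qed
  have pre: "prenet S AS Y r" by (rule prenetI[OF p1 ASsub p3 p4 p5 p6 p7 p8 p9 p10 p11])
  have sl: "same_lca NV A S AS Y"
  proof (rule same_lca_remove[OF dag(3) SN p7])
    show "\<forall>u\<in>S. \<forall>w\<in>S. (u,w) \<in> A\<^sup>* \<longleftrightarrow> (u,w) \<in> AS\<^sup>*"
    proof (intro ballI iffI)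
      fix u w assume "u \<in> S" "w \<in> S" "(u,w) \<in> A\<^sup>*"
      then show "(u,w) \<in> AS\<^sup>*" using path by blast
    next
      fix u w assume "(u,w) \<in> AS\<^sup>*"
      moreover have "AS \<subseteq> A" unfolding AS_def by blast
      ultimately show "(u,w) \<in> A\<^sup>*" using rtrancl_mono by blast
    qed
    show "\<forall>w\<in>NV-S. \<forall>x\<in>Y. \<forall>y\<in>Y. common_ancestor NV A x y w \<longrightarrow>
              (\<exists>w'\<in>S. (w,w') \<in> A\<^sup>* \<and> common_ancestor NV A x y w')"
    proof (intro ballI impI)
      fix w x y assume w: "w \<in> NV - S" and xy: "x \<in> Y" "y \<in> Y" and ca: "common_ancestor NV A x y w"
      then have "(w,x) \<in> A\<^sup>*" unfolding common_ancestor_def ancestor_def by simp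
      then have "w \<in> S" unfolding S_def using w xy by blast
      then show "\<exists>w'\<in>S. (w,w') \<in> A\<^sup>* \<and> common_ancestor NV A x y w'" using w by blast
    qed
  qed
  have SX: "S \<inter> X \<subseteq> Y"
  proof
    fix v assume v: "v \<in> S \<inter> X"
    then have "outdeg A v = 0" using leaf SN by blast
    then have "{w. (v,w) \<in> A} = {}" using finsucc unfolding outdeg_def by simp
    then have "{w. (v,w) \<in> AS} = {}" unfolding AS_def by blast
    then have "outdeg AS v = 0" unfolding outdeg_def by simp
    then show "v \<in> Y" using p8 v by blast
  qed
  show ?thesis using pre sl SX unfolding S_def AS_def by blast
qed



lemma single_explainable:
  assumes irr: "irrefl E" and W: "W = {a}"
  shows "level1_explainable W (induced_subgraph_edges E W)"
proof -
  have net: "network {0::nat} {} {0}" unfolding network_def is_dag_def by (simp add: acyclic_def)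
  have l1: "level1 {0::nat} {}" unfolding level1_def
  proof (intro allI impI)
    fix C :: "nat set" assume C: "biconnected_component {0} (undirected {}) C"
    then have "C \<subseteq> {0}" "2 \<le> card C" unfolding biconnected_component_def biconnected_on_def by auto
    moreover have "card C \<le> card {0::nat}" using \<open>C \<subseteq> {0}\<close> by (intro card_mono) simp_all
    ultimately show "card {v\<in>C. hybrid {} v} \<le> 1" by simp
  qed
  have lab: "labeling {0::nat} {0} (\<lambda>_. Odot)" unfolding labeling_def by simp
  have bij: "bij_betw (\<lambda>_. 0::nat) W {0}" using W unfolding bij_betw_def by simp
  have ex: "explains {0::nat} {} {0} (\<lambda>_. Odot) W (induced_subgraph_edges E W)"
    unfolding explains_def
  proof (intro exI conjI)
    show "bij_betw (\<lambda>_. 0::nat) W {0}" by (rule bij)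
    show "\<forall>x\<in>W. \<forall>y\<in>W. (x, y) \<in> induced_subgraph_edges E W \<longleftrightarrow>
      (0::nat) \<noteq> 0 \<and> Odot = One"
      using irr W unfolding induced_subgraph_edges_def irrefl_def by simp
  qed
  show ?thesis unfolding level1_explainable_def
    using net l1 lab ex by blast
qed

lemma sub_explainable:
  fixes V :: "'a set" and E :: "('a \<times> 'a) set"
  assumes LE: "level1_explainable V E" and W: "W \<subseteq> V" "2 \<le> card W"
  shows "level1_explainable W (induced_subgraph_edges E W)"
proof -
  obtain NV :: "nat set" and A X t where N: "network NV A X" "level1 NV A" "labeling NV X t" "explains NV A X t V E"
    using LE unfolding level1_explainable_def by blast
  obtain f where f: "bij_betw f V X" "\<forall>a\<in>V. \<forall>b\<in>V. (a,b) \<in> E \<longleftrightarrow> f a \<noteq> f b \<and> t (lca NV A (f a) (f b)) = One"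
    using N(4) unfolding explains_def by blast
  define Y where "Y = f ` W"
  have inj: "inj_on f W" using f(1) W(1) bij_betw_imp_inj_on inj_on_subset by blast
  have YX: "Y \<subseteq> X" using f(1) W(1) bij_betw_imp_surj_on unfolding Y_def by blast
  have cY: "2 \<le> card Y" using card_image[OF inj] W(2) unfolding Y_def by simp
  define S where "S = {u\<in>NV. \<exists>y\<in>Y. (u,y) \<in> A\<^sup>*}"
  obtain r where R: "prenet S (A \<inter> S \<times> S) Y r" "same_lca NV A S (A \<inter> S \<times> S) Y" "S \<inter> X \<subseteq> Y"
    using restrict[OF N(1) N(2) YX cY] unfolding S_def by blast
  obtain NV' A' where C: "NV' \<subseteq> S" "network NV' A' Y" "level1 NV' A'" "same_lca S (A \<inter> S \<times> S) NV' A' Y"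
    using cleanup[OF R(1) cY] by blast
  have sl: "same_lca NV A NV' A' Y" using R(2) C(4) by (rule same_lca_trans)
  have lcaeq: "lca NV' A' x y = lca NV A x y" if "x \<in> Y" "y \<in> Y" for x y
  proof -
    have "\<forall>u. is_lca NV A x y u \<longleftrightarrow> is_lca NV' A' x y u" using sl that unfolding same_lca_def by blast
    then have "is_lca NV A x y = is_lca NV' A' x y" by (intro ext) simp
    then show ?thesis unfolding lca_def by simp
  qed
  have SN: "S \<subseteq> NV" unfolding S_def by blast
  have lab: "labeling NV' Y t" unfolding labeling_def
  proof
    fix v assume "v \<in> NV'"
    then have vS: "v \<in> S" and vN: "v \<in> NV" using C(1) SN by blast+
    have "t v = Odot \<longleftrightarrow> v \<in> X" using N(3) vN unfolding labeling_def by blast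
    moreover have "v \<in> X \<longleftrightarrow> v \<in> Y" using YX R(3) vS by blast
    ultimately show "t v = Odot \<longleftrightarrow> v \<in> Y" by simp
  qed
  have ex: "explains NV' A' Y t W (induced_subgraph_edges E W)"
    unfolding explains_def
  proof (intro exI conjI)
    show "bij_betw f W Y" unfolding Y_def bij_betw_def using inj by simp
    show "\<forall>a\<in>W. \<forall>b\<in>W. (a,b) \<in> induced_subgraph_edges E W \<longleftrightarrow> f a \<noteq> f b \<and> t (lca NV' A' (f a) (f b)) = One"
    proof (intro ballI)
      fix a b assume ab: "a \<in> W" "b \<in> W"
      have "f a \<in> Y" "f b \<in> Y" using ab unfolding Y_def by simp_all
      then have "lca NV' A' (f a) (f b) = lca NV A (f a) (f b)" by (rule lcaeq)
      moreover have "(a,b) \<in> induced_subgraph_edges E W \<longleftrightarrow> (a,b) \<in> E"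
        using ab unfolding induced_subgraph_edges_def by simp
      moreover have "a \<in> V" "b \<in> V" using ab W(1) by blast+
      ultimately show "(a,b) \<in> induced_subgraph_edges E W \<longleftrightarrow> f a \<noteq> f b \<and> t (lca NV' A' (f a) (f b)) = One"
        using f(2) by simp
    qed
  qed
  show ?thesis unfolding level1_explainable_def using C(2,3) lab ex by blast
qed

theorem mainTheorem17:
  fixes V :: "'a set" and E :: "('a \<times> 'a) set"
  assumes "simple_graph V E" and "V \<noteq> {}"
  shows "level1_explainable V E \<longleftrightarrow>
    (\<forall>W. W \<subseteq> V \<and> W \<noteq> {} \<longrightarrow> level1_explainable W (induced_subgraph_edges E W))"
proof
  assume LE: "level1_explainable V E"
  have finV: "finite V" and irr: "irrefl E" using assms(1) unfolding simple_graph_def by simp_all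
  show "\<forall>W. W \<subseteq> V \<and> W \<noteq> {} \<longrightarrow> level1_explainable W (induced_subgraph_edges E W)"
  proof (intro allI impI)
    fix W assume W: "W \<subseteq> V \<and> W \<noteq> {}"
    have finW: "finite W" using finV W by (meson finite_subset)
    show "level1_explainable W (induced_subgraph_edges E W)"
    proof (cases "card W = 1")
      case True
      then obtain a where "W = {a}" by (meson card_1_singletonE)
      then show ?thesis by (rule single_explainable[OF irr])
    next
      case False
      have "card W \<noteq> 0" using finW W by simp
      then have "2 \<le> card W" using False by linarith
      then show ?thesis using sub_explainable[OF LE] W by blast
    qed
  qed
next
  assume H: "\<forall>W. W \<subseteq> V \<and> W \<noteq> {} \<longrightarrow> level1_explainable W (induced_subgraph_edges E W)"
  then have "level1_explainable V (induced_subgraph_edges E V)" using assms(2) by blast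
  moreover have "induced_subgraph_edges E V = E"
    using assms(1) unfolding simple_graph_def induced_subgraph_edges_def by blast
  ultimately show "level1_explainable V E" by simp
qed


end
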